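(* Let $r\geq 1$, $n\geq r+1$ and $k\geq 0$ be integers. Then $$r\,Q_{n-r,k}(r,t)=\sum_{F\in\mathcal F_{n,k}^r}t^{\mathrm{eld}(F)}.$$
   Context: Define polynomials $Q_m(x,y,z,t)$ by $Q_1=1$ and $Q_{m+1}=[x+mz+(y+t)(m+y\partial_y)]Q_m$ for $m\ge1$, and define $Q_{m,k}(x,t)$ by $Q_m(x,y,1,t)=\sum_{k\ge 0}Q_{m,k}(x,t)y^k$ (so $Q_{m,k}=0$ for $k\geq m$). All trees are rooted trees whose vertices are labeled by distinct positive integers. A vertex $j$ is a descendant of $i$ if the path from the root to $j$ passes through $i$ (every vertex is a descendant of itself); $\beta_T(i)$ is the smallest descendant of $i$. A child of $i$ is a descendant joined to $i$ by an edge $(i,j)$; children of the same vertex are brothers. A plane tree is a rooted tree in which the children of each vertex are linearly ordered (left to right). In a plane tree $T$, a vertex $j$ is elder if it has a brother $k$ to its right with $\beta_T(k)<\beta_T(j)$. An edge $(i,j)$ is proper if $j$ is an elder child of $i$ or $i<\beta_T(j)$; otherwise it is improper. $\mathcal F_{n,k}^r$ is the set of forests consisting of $r$ plane trees whose vertex sets partition $[n]=\{1,\dots,n\}$, whose roots are $1,\dots,r$, and which have exactly $k$ improper edges in total; $\mathrm{eld}(F)$ is the total number of elder vertices in $F$. *)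

theory Defs
  imports Main "HOL-Computational_Algebra.Polynomial"
begin

text \<open>Q_m(x,y,z,t) is represented, for fixed real x, z, t, as a univariate
polynomial in y.  The operator x + m z + (y+t)(m + y d/dy) is applied literally.\<close>

fun Qp :: "nat \<Rightarrow> real \<Rightarrow> real \<Rightarrow> real \<Rightarrow> real poly" where
  "Qp 0 x z t = 0"
| "Qp (Suc 0) x z t = 1"
| "Qp (Suc (Suc m)) x z t =
     (let p = Qp (Suc m) x z t; mm = real (Suc m) in
        smult (x + mm * z) p + [:t, 1:] * (smult mm p + [:0, 1:] * pderiv p))"

definition Qmk :: "nat \<Rightarrow> nat \<Rightarrow> real \<Rightarrow> real \<Rightarrow> real" where
  "Qmk m k x t = coeff (Qp m x 1 t) k"

datatype ptree = Node nat "ptree list"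

fun root :: "ptree \<Rightarrow> nat" where
  "root (Node v cs) = v"

fun labels :: "ptree \<Rightarrow> nat list" where
  "labels (Node v cs) = v # concat (map labels cs)"

definition beta :: "ptree \<Rightarrow> nat" where
  "beta t = Min (set (labels t))"

definition elder_at :: "ptree list \<Rightarrow> nat \<Rightarrow> bool" where
  "elder_at cs i \<longleftrightarrow> (\<exists>j. i < j \<and> j < length cs \<and> beta (cs ! j) < beta (cs ! i))"

definition improper_at :: "nat \<Rightarrow> ptree list \<Rightarrow> nat \<Rightarrow> bool" where
  "improper_at v cs i \<longleftrightarrow> \<not> (elder_at cs i \<or> v < beta (cs ! i))"

fun eld_tree :: "ptree \<Rightarrow> nat" where
  "eld_tree (Node v cs) =
     card {i. i < length cs \<and> elder_at cs i} + sum_list (map eld_tree cs)"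

fun imp_tree :: "ptree \<Rightarrow> nat" where
  "imp_tree (Node v cs) =
     card {i. i < length cs \<and> improper_at v cs i} + sum_list (map imp_tree cs)"

text \<open>A forest of r plane trees with roots 1..r is represented as the list of its
trees, the i-th entry (0-based) being the tree rooted at i+1.\<close>
definition eld :: "ptree list \<Rightarrow> nat" where
  "eld F = sum_list (map eld_tree F)"

definition improper_count :: "ptree list \<Rightarrow> nat" where
  "improper_count F = sum_list (map imp_tree F)"

definition forests :: "nat \<Rightarrow> nat \<Rightarrow> nat \<Rightarrow> ptree list set" where
  "forests n k r = {F. length F = r \<and> (\<forall>i<r. root (F ! i) = i + 1)
      \<and> distinct (concat (map labels F)) \<and> set (concat (map labels F)) = {1..n}
      \<and> improper_count F = k}"

end

theory Submission
  imports Defs "HOL-Library.Multiset"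
begin


fun ec :: "nat list \<Rightarrow> nat" where
  "ec [] = 0"
| "ec (b # bs) = (if (\<exists>c\<in>set bs. c < b) then 1 else 0) + ec bs"

fun ic :: "nat \<Rightarrow> nat list \<Rightarrow> nat" where
  "ic v [] = 0"
| "ic v (b # bs) = (if (\<exists>c\<in>set bs. c < b) \<or> v < b then 0 else 1) + ic v bs"

lemma card_less_Suc_split:
  "card {i. i < Suc m \<and> P i} = (if P 0 then 1 else 0) + card {i. i < m \<and> P (Suc i)}"
proof -
  have e: "{i. i < Suc m \<and> P i} = (if P 0 then {0} else {}) \<union> Suc ` {i. i < m \<and> P (Suc i)}"
    by (auto simp: image_iff less_Suc_eq_0_disj)
  have "card (Suc ` {i. i < m \<and> P (Suc i)}) = card {i. i < m \<and> P (Suc i)}"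
    by (simp add: card_image)
  then show ?thesis unfolding e by (auto simp: card_insert_if)
qed

lemma elder_at_Cons_Suc: "elder_at (c # cs) (Suc i) = elder_at cs i"
proof
  assume "elder_at (c # cs) (Suc i)"
  then obtain j where j: "Suc i < j" "j < length (c # cs)" "beta ((c # cs) ! j) < beta ((c # cs) ! Suc i)"
    by (auto simp: elder_at_def)
  then obtain j' where "j = Suc j'" by (cases j) auto
  then show "elder_at cs i" using j unfolding elder_at_def by (intro exI[of _ j']) simp
next
  assume "elder_at cs i"
  then obtain j where j: "i < j" "j < length cs" "beta (cs ! j) < beta (cs ! i)"
    by (auto simp: elder_at_def)
  then show "elder_at (c # cs) (Suc i)" unfolding elder_at_def by (intro exI[of _ "Suc j"]) simp
qed

lemma elder_at_Cons_0: "elder_at (c # cs) 0 \<longleftrightarrow> (\<exists>b\<in>set (map beta cs). b < beta c)"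
proof
  assume "elder_at (c # cs) 0"
  then obtain j where j: "0 < j" "j < length (c # cs)" "beta ((c # cs) ! j) < beta c"
    by (auto simp: elder_at_def)
  then obtain j' where "j = Suc j'" by (cases j) auto
  then show "\<exists>b\<in>set (map beta cs). b < beta c" using j by (auto intro!: bexI[of _ "cs ! j'"])
next
  assume "\<exists>b\<in>set (map beta cs). b < beta c"
  then obtain j where j: "j < length cs" "beta (cs ! j) < beta c"
    by (auto simp: in_set_conv_nth)
  then show "elder_at (c # cs) 0" unfolding elder_at_def by (intro exI[of _ "Suc j"]) simp
qed

lemma card_elder: "card {i. i < length cs \<and> elder_at cs i} = ec (map beta cs)"
proof (induction cs)
  case Nil then show ?case by simp
next
  case (Cons c cs)
  show ?case using Cons
    by (simp only: length_Cons card_less_Suc_split elder_at_Cons_Suc elder_at_Cons_0) simp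
qed

lemma improper_at_Cons_Suc: "improper_at v (c # cs) (Suc i) = improper_at v cs i"
  unfolding improper_at_def by (simp add: elder_at_Cons_Suc)

lemma improper_at_Cons_0:
  "improper_at v (c # cs) 0 \<longleftrightarrow> \<not> ((\<exists>b\<in>set (map beta cs). b < beta c) \<or> v < beta c)"
  unfolding improper_at_def by (simp add: elder_at_Cons_0)

lemma card_improper: "card {i. i < length cs \<and> improper_at v cs i} = ic v (map beta cs)"
proof (induction cs)
  case Nil then show ?case by simp
next
  case (Cons c cs)
  show ?case using Cons
    by (simp only: length_Cons card_less_Suc_split improper_at_Cons_Suc improper_at_Cons_0) simp
qed

lemma eld_Node[simp]: "eld_tree (Node v cs) = ec (map beta cs) + sum_list (map eld_tree cs)"
  by (simp add: card_elder)

lemma imp_Node[simp]: "imp_tree (Node v cs) = ic v (map beta cs) + sum_list (map imp_tree cs)"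
  by (simp add: card_improper)

declare eld_tree.simps[simp del] imp_tree.simps[simp del]

lemma ec_app_cong:
  assumes "\<forall>b\<in>set xs. (\<exists>c\<in>set ys. c < b) = (\<exists>c\<in>set ys'. c < b)"
  shows "ec (xs @ ys) + ec ys' = ec (xs @ ys') + ec ys"
  using assms by (induction xs) auto

lemma ic_app_cong:
  assumes "\<forall>b\<in>set xs. (\<exists>c\<in>set ys. c < b) = (\<exists>c\<in>set ys'. c < b)"
    and "\<forall>b\<in>set xs. \<not> (\<exists>c\<in>set ys. c < b) \<longrightarrow> (v < b \<longleftrightarrow> v' < b)"
  shows "ic v (xs @ ys) + ic v' ys' = ic v' (xs @ ys') + ic v ys"
  using assms by (induction xs) auto

lemma labels_ne[simp]: "labels t \<noteq> []"
  by (cases t) auto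

lemma beta_in: "beta t \<in> set (labels t)"
  unfolding beta_def by (rule Min_in) simp_all

lemma beta_le: "x \<in> set (labels t) \<Longrightarrow> beta t \<le> x"
  unfolding beta_def by simp

lemma beta_Node: "beta (Node v cs) = Min (insert v (beta ` set cs))"
proof (rule antisym)
  show "beta (Node v cs) \<le> Min (insert v (beta ` set cs))"
  proof (subst Min_ge_iff, simp, simp, intro ballI)
    fix a assume "a \<in> insert v (beta ` set cs)"
    then show "beta (Node v cs) \<le> a"
    proof
      assume "a = v" then show ?thesis by (intro beta_le) simp
    next
      assume "a \<in> beta ` set cs"
      then obtain c where c: "c \<in> set cs" "a = beta c" by auto
      have "a \<in> set (labels (Node v cs))" using c beta_in[of c] by auto
      then show ?thesis by (rule beta_le)
    qed
  qed
next
  have "beta (Node v cs) \<in> set (labels (Node v cs))" by (rule beta_in)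
  then have "beta (Node v cs) = v \<or> (\<exists>c\<in>set cs. beta (Node v cs) \<in> set (labels c))" by auto
  then show "Min (insert v (beta ` set cs)) \<le> beta (Node v cs)"
  proof
    assume "beta (Node v cs) = v" then show ?thesis by simp
  next
    assume "\<exists>c\<in>set cs. beta (Node v cs) \<in> set (labels c)"
    then obtain c where c: "c \<in> set cs" "beta (Node v cs) \<in> set (labels c)" by auto
    have "Min (insert v (beta ` set cs)) \<le> beta c" using c by simp
    also have "\<dots> \<le> beta (Node v cs)" using c beta_le by blast
    finally show ?thesis .
  qed
qed

datatype frame = Fr nat "ptree list" "ptree list"

fun plugT :: "frame list \<Rightarrow> ptree \<Rightarrow> ptree" where
  "plugT [] s = s"
| "plugT (Fr v L R # fs) s = Node v (L @ plugT fs s # R)"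

lemma plugT_append: "plugT (fs @ gs) s = plugT fs (plugT gs s)"
  by (induction fs s rule: plugT.induct) auto

lemma beta_plugT: "beta s = beta s' \<Longrightarrow> beta (plugT fs s) = beta (plugT fs s')"
  by (induction fs s rule: plugT.induct) (auto simp: beta_Node)

lemma map_beta_plugT: "beta s = beta s' \<Longrightarrow>
   map beta (L @ plugT fs s # R) = map beta (L @ plugT fs s' # R)"
  using beta_plugT[of s s' fs] by simp

lemma eld_plugT:
  assumes "beta s = beta s'"
  shows "eld_tree (plugT fs s) + eld_tree s' = eld_tree (plugT fs s') + eld_tree s"
proof (induction fs)
  case Nil show ?case by simp
next
  case (Cons f fs)
  obtain v L R where f: "f = Fr v L R" by (cases f)
  have mb: "map beta (L @ plugT fs s # R) = map beta (L @ plugT fs s' # R)"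
    by (rule map_beta_plugT[OF assms])
  have e: "\<And>X. eld_tree (Node v (L @ X # R)) = ec (map beta (L @ X # R)) +
      sum_list (map eld_tree L) + eld_tree X + sum_list (map eld_tree R)" by simp
  show ?case unfolding f plugT.simps e mb using Cons.IH by linarith
qed

lemma imp_plugT:
  assumes "beta s = beta s'"
  shows "imp_tree (plugT fs s) + imp_tree s' = imp_tree (plugT fs s') + imp_tree s"
proof (induction fs)
  case Nil show ?case by simp
next
  case (Cons f fs)
  obtain v L R where f: "f = Fr v L R" by (cases f)
  have mb: "map beta (L @ plugT fs s # R) = map beta (L @ plugT fs s' # R)"
    by (rule map_beta_plugT[OF assms])
  have e: "\<And>X. imp_tree (Node v (L @ X # R)) = ic v (map beta (L @ X # R)) +
      sum_list (map imp_tree L) + imp_tree X + sum_list (map imp_tree R)" by simp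
  show ?case unfolding f plugT.simps e mb using Cons.IH by linarith
qed

lemma mset_plugT:
  "mset (labels (plugT fs s)) + mset (labels s') = mset (labels (plugT fs s')) + mset (labels s)"
proof (induction fs)
  case Nil show ?case by simp
next
  case (Cons f fs)
  obtain v L R where f: "f = Fr v L R" by (cases f)
  have e: "\<And>X. mset (labels (Node v (L @ X # R))) = {#v#} + mset (concat (map labels L)) +
      mset (labels X) + mset (concat (map labels R))" by simp
  show ?case unfolding f plugT.simps e using Cons.IH by (simp add: add.assoc add.left_commute)
qed

lemma labels_plugT_sub: "set (labels s) \<subseteq> set (labels (plugT fs s))"
proof (induction fs)
  case Nil show ?case by simp
next
  case (Cons f fs)
  obtain v L R where f: "f = Fr v L R" by (cases f)
  have "set (labels (plugT fs s)) \<subseteq> set (labels (plugT (f # fs) s))" unfolding f by auto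
  then show ?case using Cons.IH by blast
qed

lemma distinct_plugT: "distinct (labels (plugT fs s)) \<Longrightarrow> distinct (labels s)"
proof (induction fs)
  case Nil then show ?case by simp
next
  case (Cons f fs)
  obtain v L R where f: "f = Fr v L R" by (cases f)
  have "distinct (labels (plugT fs s))" using Cons.prems unfolding f by simp
  then show ?case using Cons.IH by blast
qed


fun kids :: "ptree \<Rightarrow> ptree list" where
  "kids (Node v cs) = cs"

lemma plugT_exists: "a \<in> set (labels t) \<Longrightarrow> \<exists>fs cs. t = plugT fs (Node a cs)"
proof (induction t)
  case (Node v cs)
  show ?case
  proof (cases "a = v")
    case True then show ?thesis by (intro exI[of _ "[]"] exI[of _ cs]) simp
  next
    case False
    then obtain c where c: "c \<in> set cs" "a \<in> set (labels c)" using Node.prems by auto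
    from Node.IH[OF c] obtain fs ds where "c = plugT fs (Node a ds)" by blast
    moreover obtain L R where "cs = L @ c # R" using split_list[OF c(1)] by blast
    ultimately show ?thesis by (intro exI[of _ "Fr v L R # fs"] exI[of _ ds]) simp
  qed
qed

lemma split_unique_aux:
  assumes d: "distinct (concat (map labels (L2 @ X2 # R2)))"
    and e: "L1 @ X1 # R1 = L2 @ X2 # R2" and lt: "length L1 < length L2"
    and a1: "a \<in> set (labels X1)" and a2: "a \<in> set (labels X2)"
  shows False
proof -
  have "(L1 @ X1 # R1) ! length L1 = (L2 @ X2 # R2) ! length L1" using e by simp
  then have "X1 = L2 ! length L1" using lt by (simp add: nth_append)
  then have "X1 \<in> set L2" using lt by simp
  then have "a \<in> set (concat (map labels L2))" using a1 by auto
  moreover have "set (concat (map labels L2)) \<inter> set (labels X2) = {}" using d by (simp, blast)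
  ultimately show False using a2 by blast
qed

lemma split_unique:
  assumes d: "distinct (concat (map labels (L @ X # R)))"
    and e: "L @ X # R = L' @ X' # R'"
    and a: "a \<in> set (labels X)" "a \<in> set (labels X')"
  shows "L = L' \<and> X = X' \<and> R = R'"
proof -
  have d': "distinct (concat (map labels (L' @ X' # R')))" using d e by simp
  have "length L = length L'"
  proof (rule ccontr)
    assume "length L \<noteq> length L'"
    then have "length L < length L' \<or> length L' < length L" by arith
    then show False
    proof
      assume "length L < length L'"
      then show False using split_unique_aux[OF d' e _ a] by blast
    next
      assume "length L' < length L"
      then show False using split_unique_aux[OF d e[symmetric] _ a(2) a(1)] by blast
    qed
  qed
  then show ?thesis using e by simp
qed

lemma distinct_Node: "distinct (labels (Node v (L @ X # R))) \<Longrightarrow>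
   distinct (concat (map labels (L @ X # R))) \<and> distinct (labels X) \<and> v \<notin> set (labels X)"
  by simp

lemma plugT_unique:
  "distinct (labels (plugT fs (Node a cs))) \<Longrightarrow> plugT fs (Node a cs) = plugT fs' (Node a cs')
   \<Longrightarrow> fs = fs' \<and> cs = cs'"
proof (induction fs arbitrary: fs')
  case Nil
  show ?case
  proof (cases fs')
    case Nil then show ?thesis using Nil.prems by simp
  next
    case (Cons f gs)
    obtain v L R where f: "f = Fr v L R" by (cases f)
    have "Node a cs = Node v (L @ plugT gs (Node a cs') # R)" using Nil.prems Cons f by simp
    then have "v = a" "cs = L @ plugT gs (Node a cs') # R" by auto
    moreover have "a \<in> set (labels (plugT gs (Node a cs')))"
      using labels_plugT_sub[of "Node a cs'" gs] by auto
    ultimately have False using Nil.prems(1) by auto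
    then show ?thesis ..
  qed
next
  case (Cons f fs1)
  obtain v L R where f: "f = Fr v L R" by (cases f)
  have d0: "distinct (labels (Node v (L @ plugT fs1 (Node a cs) # R)))" using Cons.prems(1) f by simp
  have a1: "a \<in> set (labels (plugT fs1 (Node a cs)))"
    using labels_plugT_sub[of "Node a cs" fs1] by auto
  show ?case
  proof (cases fs')
    case Nil
    then have "Node a cs' = Node v (L @ plugT fs1 (Node a cs) # R)" using Cons.prems f by simp
    then have "v = a" by simp
    then have False using distinct_Node[OF d0] a1 by blast
    then show ?thesis ..
  next
    case (Cons f' gs)
    obtain v' L' R' where f': "f' = Fr v' L' R'" by (cases f')
    have e: "v = v'" "L @ plugT fs1 (Node a cs) # R = L' @ plugT gs (Node a cs') # R'"
      using Cons.prems(2) f f' Cons by auto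
    have a2: "a \<in> set (labels (plugT gs (Node a cs')))"
      using labels_plugT_sub[of "Node a cs'" gs] by auto
    have s: "L = L' \<and> plugT fs1 (Node a cs) = plugT gs (Node a cs') \<and> R = R'"
      using split_unique[OF conjunct1[OF distinct_Node[OF d0]] e(2) a1 a2] .
    have "fs1 = gs \<and> cs = cs'"
      using Cons.IH[of gs] s conjunct1[OF conjunct2[OF distinct_Node[OF d0]]] by blast
    then show ?thesis using s e f f' Cons by simp
  qed
qed

definition DecT :: "ptree \<Rightarrow> (frame list \<times> ptree) set" where
  "DecT t = {(fs, s). plugT fs s = t}"

definition frm :: "nat \<Rightarrow> ptree list \<Rightarrow> nat \<Rightarrow> frame list \<times> ptree \<Rightarrow> frame list \<times> ptree" where
  "frm v cs i x = (Fr v (take i cs) (drop (Suc i) cs) # fst x, snd x)"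

lemma DecT_Node: "DecT (Node v cs) =
   insert ([], Node v cs) (\<Union>i\<in>{..<length cs}. frm v cs i ` DecT (cs ! i))"
proof (intro equalityI subsetI)
  fix x assume "x \<in> DecT (Node v cs)"
  then obtain fs s where x: "x = (fs, s)" "plugT fs s = Node v cs" by (auto simp: DecT_def)
  show "x \<in> insert ([], Node v cs) (\<Union>i\<in>{..<length cs}. frm v cs i ` DecT (cs ! i))"
  proof (cases fs)
    case Nil then show ?thesis using x by simp
  next
    case (Cons f gs)
    obtain v' L R where f: "f = Fr v' L R" by (cases f)
    have vc: "v' = v" "cs = L @ plugT gs s # R" using x Cons f by auto
    have tk: "take (length L) cs = L" "drop (Suc (length L)) cs = R" "cs ! length L = plugT gs s"
      "length L < length cs" using vc by auto
    have "x = frm v cs (length L) (gs, s)" using x Cons f tk vc by (simp add: frm_def)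
    moreover have "(gs, s) \<in> DecT (cs ! length L)" using tk by (simp add: DecT_def)
    ultimately show ?thesis using tk by blast
  qed
next
  fix x assume "x \<in> insert ([], Node v cs) (\<Union>i\<in>{..<length cs}. frm v cs i ` DecT (cs ! i))"
  then show "x \<in> DecT (Node v cs)"
  proof
    assume "x = ([], Node v cs)" then show ?thesis by (simp add: DecT_def)
  next
    assume "x \<in> (\<Union>i\<in>{..<length cs}. frm v cs i ` DecT (cs ! i))"
    then obtain i y where i: "i < length cs" "y \<in> DecT (cs ! i)" "x = frm v cs i y" by auto
    then have "plugT (fst y) (snd y) = cs ! i" by (auto simp: DecT_def)
    then show ?thesis using i id_take_nth_drop[OF i(1)]
      by (auto simp: DecT_def frm_def)
  qed
qed

lemma finite_DecT: "finite (DecT t)"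
proof (induction t)
  case (Node v cs)
  then show ?case by (simp add: DecT_Node)
qed

lemma frm_inj: "inj (frm v cs i)"
  by (auto simp: inj_on_def frm_def prod_eq_iff)

lemma sum_DecT: "sum h (DecT (Node v cs)) =
   h ([], Node v cs) + (\<Sum>i<length cs. \<Sum>x\<in>DecT (cs ! i). h (frm v cs i x))"
proof -
  have nin: "([], Node v cs) \<notin> (\<Union>i\<in>{..<length cs}. frm v cs i ` DecT (cs ! i))"
    by (auto simp: frm_def)
  have "sum h (\<Union>i\<in>{..<length cs}. frm v cs i ` DecT (cs ! i)) =
      (\<Sum>i<length cs. sum h (frm v cs i ` DecT (cs ! i)))"
  proof (rule sum.UNION_disjoint)
    show "\<forall>i\<in>{..<length cs}. \<forall>j\<in>{..<length cs}. i \<noteq> j \<longrightarrow>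
        frm v cs i ` DecT (cs ! i) \<inter> frm v cs j ` DecT (cs ! j) = {}"
    proof (intro ballI impI)
      fix i j assume ij: "i \<in> {..<length cs}" "j \<in> {..<length cs}" "i \<noteq> j"
      have "length (take i cs) \<noteq> length (take j cs)" using ij by simp
      then show "frm v cs i ` DecT (cs ! i) \<inter> frm v cs j ` DecT (cs ! j) = {}"
        by (auto simp: frm_def) (metis length_take)
    qed
  qed (simp_all add: finite_DecT)
  also have "\<dots> = (\<Sum>i<length cs. \<Sum>x\<in>DecT (cs ! i). h (frm v cs i x))"
    by (rule sum.cong[OF refl]) (simp add: sum.reindex[OF inj_on_subset[OF frm_inj subset_UNIV]])
  finally show ?thesis using nin finite_DecT[of "Node v cs"]
    by (simp add: DecT_Node[of v cs] finite_DecT)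
qed

fun subsum :: "(ptree \<Rightarrow> nat) \<Rightarrow> ptree \<Rightarrow> nat" where
  "subsum g (Node v cs) = g (Node v cs) + sum_list (map (subsum g) cs)"

lemma sum_list_map_nth: "sum_list (map f xs) = (\<Sum>i<length xs. f (xs ! i))"
  by (simp add: sum_list_sum_nth atLeast0LessThan)

lemma sum_DecT_snd: "(\<Sum>x\<in>DecT t. g (snd x)) = subsum g t"
proof (induction t)
  case (Node v cs)
  have "(\<Sum>x\<in>DecT (Node v cs). g (snd x)) =
      g (Node v cs) + (\<Sum>i<length cs. \<Sum>x\<in>DecT (cs ! i). g (snd x))"
    by (simp add: sum_DecT frm_def)
  also have "\<dots> = g (Node v cs) + (\<Sum>i<length cs. subsum g (cs ! i))"
    using Node.IH by simp
  finally show ?case by (simp add: sum_list_map_nth)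
qed

lemma sum_DecT_nonroot: "(\<Sum>x\<in>DecT t. if fst x = [] then 0 else g (snd x)) + g t = subsum g t"
proof (cases t)
  case (Node v cs)
  have "(\<Sum>x\<in>DecT (Node v cs). if fst x = [] then 0 else g (snd x)) =
      (\<Sum>i<length cs. \<Sum>x\<in>DecT (cs ! i). g (snd x))"
    by (simp add: sum_DecT frm_def)
  also have "\<dots> = (\<Sum>i<length cs. subsum g (cs ! i))" by (simp add: sum_DecT_snd)
  finally show ?thesis using Node by (simp add: sum_list_map_nth)
qed

lemma subsum_one: "subsum (\<lambda>_. 1) t = length (labels t)"
  by (induction t) (simp add: length_concat o_def cong: map_cong)

lemma subsum_kids: "subsum (\<lambda>s. length (kids s)) t + 1 = length (labels t)"
proof (induction t)
  case (Node v cs)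
  let ?g = "subsum (\<lambda>s. length (kids s))"
  have h: "map (\<lambda>c. ?g c + 1) cs = map (\<lambda>c. length (labels c)) cs"
    using Node.IH by (intro map_cong) auto
  have e: "sum_list (map (\<lambda>c. ?g c + 1) cs) = sum_list (map ?g cs) + length cs"
    by (induction cs) auto
  have s1: "sum_list (map (\<lambda>c. length (labels c)) cs) = sum_list (map ?g cs) + length cs"
    using e unfolding h .
  show ?case using s1 by (simp add: length_concat o_def)
qed

lemma subsum_imp: "subsum (\<lambda>s. ic (root s) (map beta (kids s))) t = imp_tree t"
  by (induction t) (simp cong: map_cong)


datatype choice = CLeaf nat | CSub | CImp nat bool

fun loc :: "nat \<Rightarrow> ptree \<Rightarrow> choice \<Rightarrow> ptree" where
  "loc N (Node v cs) (CLeaf i) = Node v (take i cs @ Node N [] # drop i cs)"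
| "loc N s CSub = Node N [s]"
| "loc N (Node u cs) (CImp j b) = Node N (take j cs @
     (if b then [cs ! j, Node u (drop (Suc j) cs)] else [Node u (drop (Suc j) cs), cs ! j]))"

fun validc :: "ptree \<Rightarrow> choice \<Rightarrow> bool" where
  "validc (Node v cs) (CLeaf i) = (i \<le> length cs)"
| "validc s CSub = True"
| "validc (Node u cs) (CImp j b) = (j < length cs \<and> improper_at u cs j)"

fun dlt :: "choice \<Rightarrow> nat" where
  "dlt (CLeaf i) = 0"
| "dlt CSub = 1"
| "dlt (CImp j b) = (if b then 1 else 0)"

fun eps :: "ptree \<Rightarrow> choice \<Rightarrow> nat" where
  "eps (Node v cs) (CLeaf i) = (if i < length cs then 1 else 0)"
| "eps s CSub = 0"
| "eps s (CImp j b) = (if b then 0 else 1)"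

lemma beta_Leaf: "beta (Node N []) = N"
  by (simp add: beta_Node)

lemma beta_lt: "\<forall>x\<in>set (labels t). x < N \<Longrightarrow> beta t < N"
  using beta_in by blast

lemma Min_Un_big:
  assumes "finite A" "finite E" "a \<in> A" "\<forall>x\<in>E. a < x"
  shows "Min (A \<union> E) = Min A"
proof (cases "E = {}")
  case True then show ?thesis by simp
next
  case False
  have "Min A \<le> a" using assms by simp
  moreover have "a < Min E" using assms False by simp
  ultimately have "Min A \<le> Min E" by (meson le_less_trans less_imp_le)
  moreover have "Min (A \<union> E) = min (Min A) (Min E)" using Min_Un[of A E] assms False by auto
  ultimately show ?thesis by (simp add: min_def)
qed

lemma ex_less_min:
  fixes a b :: nat
  assumes "a \<in> set ys" "\<forall>c\<in>set ys. a \<le> c"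
  shows "(\<exists>c\<in>set ys. c < b) \<longleftrightarrow> a < b"
  using assms by (auto intro: le_less_trans)

section \<open>Leaf insertion\<close>

lemma leaf_local:
  assumes lt: "\<forall>x\<in>set (labels (Node v cs)). x < N" and i: "i \<le> length cs"
  shows "beta (loc N (Node v cs) (CLeaf i)) = beta (Node v cs)"
    "eld_tree (loc N (Node v cs) (CLeaf i)) = eld_tree (Node v cs) + eps (Node v cs) (CLeaf i)"
    "imp_tree (loc N (Node v cs) (CLeaf i)) = imp_tree (Node v cs) + dlt (CLeaf i)"
    "mset (labels (loc N (Node v cs) (CLeaf i))) = mset (labels (Node v cs)) + {#N#}"
proof -
  let ?L = "take i cs" and ?R = "drop i cs"
  have cs: "cs = ?L @ ?R" by simp
  have vN: "v < N" using lt by simp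
  have bl: "\<forall>c\<in>set cs. beta c < N"
  proof
    fix c assume "c \<in> set cs"
    then have "\<forall>x\<in>set (labels c). x < N" using lt by auto
    then show "beta c < N" by (rule beta_lt)
  qed
  have setc: "beta ` set (?L @ Node N [] # ?R) = insert N (beta ` set cs)"
    using beta_Leaf[of N] by (subst (2) cs, simp only: set_append image_Un) auto
  have fin: "finite (beta ` set cs)" by simp
  show "beta (loc N (Node v cs) (CLeaf i)) = beta (Node v cs)"
    unfolding loc.simps beta_Node setc
    using Min_Un_big[of "insert v (beta ` set cs)" "{N}" v] vN fin
    by (simp add: insert_commute)
  have bL: "\<forall>b\<in>set (map beta ?L). b < N" using bl by (auto dest: in_set_takeD)
  have c1: "\<forall>b\<in>set (map beta ?L). (\<exists>c\<in>set (N # map beta ?R). c < b) = (\<exists>c\<in>set (map beta ?R). c < b)"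
    using bL by auto
  have c2: "\<forall>b\<in>set (map beta ?L). \<not> (\<exists>c\<in>set (N # map beta ?R). c < b) \<longrightarrow> (v < b \<longleftrightarrow> v < b)"
    by simp
  have ecR: "ec (N # map beta ?R) = (if i < length cs then 1 else 0) + ec (map beta ?R)"
  proof -
    have "(\<exists>c\<in>set (map beta ?R). c < N) \<longleftrightarrow> i < length cs"
    proof
      assume "i < length cs"
      then have "cs ! i \<in> set ?R" by (simp add: in_set_conv_nth) (metis add.right_neutral zero_less_diff)
      then show "\<exists>c\<in>set (map beta ?R). c < N" using bl by (auto dest: in_set_dropD)
    next
      assume "\<exists>c\<in>set (map beta ?R). c < N"
      then have "?R \<noteq> []" by auto
      then show "i < length cs" by simp
    qed
    then show ?thesis by simp
  qed
  have e1: "ec (map beta ?L @ N # map beta ?R) + ec (map beta ?R) =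
      ec (map beta ?L @ map beta ?R) + ec (N # map beta ?R)"
    by (rule ec_app_cong[OF c1])
  have i1: "ic v (map beta ?L @ N # map beta ?R) + ic v (map beta ?R) =
      ic v (map beta ?L @ map beta ?R) + ic v (N # map beta ?R)"
    by (rule ic_app_cong[OF c1 c2])
  have icR: "ic v (N # map beta ?R) = ic v (map beta ?R)" using vN by simp
  have mb: "map beta (?L @ Node N [] # ?R) = map beta ?L @ N # map beta ?R"
    by (simp add: beta_Leaf)
  have mb2: "map beta cs = map beta ?L @ map beta ?R"
    by (subst cs, simp only: map_append)
  have se: "sum_list (map eld_tree cs) = sum_list (map eld_tree ?L) + sum_list (map eld_tree ?R)"
    by (subst cs, simp only: map_append sum_list_append)
  have si: "sum_list (map imp_tree cs) = sum_list (map imp_tree ?L) + sum_list (map imp_tree ?R)"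
    by (subst cs, simp only: map_append sum_list_append)
  have l0: "eld_tree (Node N []) = 0" "imp_tree (Node N []) = 0" by simp_all
  show "eld_tree (loc N (Node v cs) (CLeaf i)) = eld_tree (Node v cs) + eps (Node v cs) (CLeaf i)"
    unfolding loc.simps eld_Node mb mb2 se eps.simps using e1 ecR l0 by simp
  show "imp_tree (loc N (Node v cs) (CLeaf i)) = imp_tree (Node v cs) + dlt (CLeaf i)"
    unfolding loc.simps imp_Node mb mb2 si dlt.simps using i1 icR l0 by simp
  have ml: "mset (concat (map labels cs)) = mset (concat (map labels ?L)) + mset (concat (map labels ?R))"
    by (subst cs, simp only: map_append concat_append mset_append)
  show "mset (labels (loc N (Node v cs) (CLeaf i))) = mset (labels (Node v cs)) + {#N#}"
    unfolding loc.simps labels.simps using ml by simp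
qed

section \<open>Subdivision\<close>

lemma sub_local:
  assumes lt: "\<forall>x\<in>set (labels s). x < N"
  shows "beta (loc N s CSub) = beta s"
    "eld_tree (loc N s CSub) = eld_tree s + eps s CSub"
    "imp_tree (loc N s CSub) = imp_tree s + dlt CSub"
    "mset (labels (loc N s CSub)) = mset (labels s) + {#N#}"
proof -
  have b: "beta s < N" using lt by (rule beta_lt)
  show "beta (loc N s CSub) = beta s" using b by (simp add: beta_Node)
  show "eld_tree (loc N s CSub) = eld_tree s + eps s CSub" by simp
  show "imp_tree (loc N s CSub) = imp_tree s + dlt CSub" using b by simp
  show "mset (labels (loc N s CSub)) = mset (labels s) + {#N#}" by simp
qed

section \<open>Improper-edge operation\<close>

lemma elder_at_split: "elder_at (L @ w # R) (length L) \<longleftrightarrow> (\<exists>b\<in>set (map beta R). b < beta w)"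
  by (induction L) (simp_all add: elder_at_Cons_Suc elder_at_Cons_0)

lemma improper_at_split: "improper_at u (L @ w # R) (length L) \<longleftrightarrow>
    \<not> ((\<exists>b\<in>set (map beta R). b < beta w) \<or> u < beta w)"
  unfolding improper_at_def by (simp add: elder_at_split)

lemma imp_facts:
  assumes d: "distinct (labels (Node u (L @ w # R)))"
    and imp: "improper_at u (L @ w # R) (length L)"
  shows "\<forall>c\<in>set R. beta w < beta c" "beta w < u" "beta w < beta (Node u R)"
proof -
  have ne: "\<not> (\<exists>b\<in>set (map beta R). b < beta w)" "\<not> u < beta w"
    using imp unfolding improper_at_split by auto
  have dl: "distinct (u # concat (map labels L) @ labels w @ concat (map labels R))"
    using d by simp
  have dis: "set (labels w) \<inter> set (concat (map labels R)) = {}"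
    using dl by (simp only: distinct.simps distinct_append)
  have uw: "u \<notin> set (labels w)" using dl by simp
  show R1: "\<forall>c\<in>set R. beta w < beta c"
  proof
    fix c assume c: "c \<in> set R"
    have bc: "beta c \<in> set (concat (map labels R))" using c beta_in[of c] by auto
    have "beta c \<noteq> beta w"
    proof
      assume "beta c = beta w"
      then show False using bc dis beta_in[of w] by (metis IntI empty_iff)
    qed
    moreover have "\<not> beta c < beta w" using ne(1) c by auto
    ultimately show "beta w < beta c" by simp
  qed
  have "beta w \<noteq> u" using uw beta_in[of w] by auto
  then show U: "beta w < u" using ne(2) by simp
  show "beta w < beta (Node u R)" unfolding beta_Node using R1 U by simp
qed

lemma imp_local_gen:
  assumes lt: "\<forall>x\<in>set (labels (Node u (L @ w # R))). x < N"
    and d: "distinct (labels (Node u (L @ w # R)))"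
    and imp: "improper_at u (L @ w # R) (length L)"
    and P: "P = [w, Node u R] \<or> P = [Node u R, w]"
  shows "beta (Node N (L @ P)) = beta (Node u (L @ w # R))"
    "eld_tree (Node N (L @ P)) = eld_tree (Node u (L @ w # R)) + ec (map beta P)"
    "imp_tree (Node N (L @ P)) + 1 = imp_tree (Node u (L @ w # R)) + ic N (map beta P)"
    "mset (labels (Node N (L @ P))) = mset (labels (Node u (L @ w # R))) + {#N#}"
proof -
  note f = imp_facts[OF d imp]
  let ?bw = "beta w" and ?bu = "beta (Node u R)"
  have wN: "?bw < N" using lt beta_in[of w] by auto
  have uN: "u < N" using lt by simp
  have sP: "set (map beta P) = {?bw, ?bu}" using P by auto
  have setP: "beta ` set (L @ P) = beta ` set L \<union> {?bw, ?bu}" using P by auto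
  have setS: "insert u (beta ` set (L @ w # R)) = insert ?bw (beta ` set L) \<union> insert u (beta ` set R)"
    by auto
  have setG: "insert N (beta ` set (L @ P)) = insert ?bw (beta ` set L) \<union> {N, ?bu}"
    using setP by auto
  have m1: "Min (insert ?bw (beta ` set L) \<union> {N, ?bu}) = Min (insert ?bw (beta ` set L))"
    by (rule Min_Un_big) (use f wN in auto)
  have m2: "Min (insert ?bw (beta ` set L) \<union> insert u (beta ` set R)) = Min (insert ?bw (beta ` set L))"
    by (rule Min_Un_big) (use f in auto)
  have "beta (Node N (L @ P)) = Min (insert N (beta ` set (L @ P)))" by (rule beta_Node)
  also have "\<dots> = Min (insert ?bw (beta ` set L) \<union> {N, ?bu})" by (simp only: setG)
  also have "\<dots> = Min (insert ?bw (beta ` set L) \<union> insert u (beta ` set R))" by (simp only: m1 m2)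
  also have "\<dots> = Min (insert u (beta ` set (L @ w # R)))" by (simp only: setS)
  also have "\<dots> = beta (Node u (L @ w # R))" by (rule beta_Node[symmetric])
  finally show "beta (Node N (L @ P)) = beta (Node u (L @ w # R))" .
  have minY: "\<And>b. (\<exists>c\<in>set (map beta P). c < b) \<longleftrightarrow> ?bw < b"
    using sP f(3) by auto
  have minS: "\<And>b. (\<exists>c\<in>set (?bw # map beta R). c < b) \<longleftrightarrow> ?bw < b"
    using f(1) by (auto intro: less_trans)
  have c1: "\<forall>b\<in>set (map beta L). (\<exists>c\<in>set (map beta P). c < b) = (\<exists>c\<in>set (?bw # map beta R). c < b)"
    using minY minS by simp
  have c2: "\<forall>b\<in>set (map beta L). \<not> (\<exists>c\<in>set (map beta P). c < b) \<longrightarrow> (N < b \<longleftrightarrow> u < b)"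
    using minY f(2) uN by auto
  have e1: "ec (map beta L @ map beta P) + ec (?bw # map beta R) =
      ec (map beta L @ ?bw # map beta R) + ec (map beta P)"
    by (rule ec_app_cong[OF c1])
  have i1: "ic N (map beta L @ map beta P) + ic u (?bw # map beta R) =
      ic u (map beta L @ ?bw # map beta R) + ic N (map beta P)"
    by (rule ic_app_cong[OF c1 c2])
  have ecw: "ec (?bw # map beta R) = ec (map beta R)" using f(1) by auto
  have icw: "ic u (?bw # map beta R) = 1 + ic u (map beta R)" using f(1) f(2) by auto
  have sE: "sum_list (map eld_tree P) = eld_tree w + ec (map beta R) + sum_list (map eld_tree R)"
    using P by auto
  have sI: "sum_list (map imp_tree P) = imp_tree w + ic u (map beta R) + sum_list (map imp_tree R)"
    using P by auto
  show "eld_tree (Node N (L @ P)) = eld_tree (Node u (L @ w # R)) + ec (map beta P)"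
    using e1 ecw sE by simp
  show "imp_tree (Node N (L @ P)) + 1 = imp_tree (Node u (L @ w # R)) + ic N (map beta P)"
    using i1 icw sI by simp
  show "mset (labels (Node N (L @ P))) = mset (labels (Node u (L @ w # R))) + {#N#}"
    using P by auto
qed

lemma imp_local:
  assumes lt: "\<forall>x\<in>set (labels (Node u cs)). x < N"
    and d: "distinct (labels (Node u cs))"
    and v: "validc (Node u cs) (CImp j b)"
  shows "beta (loc N (Node u cs) (CImp j b)) = beta (Node u cs)"
    "eld_tree (loc N (Node u cs) (CImp j b)) = eld_tree (Node u cs) + eps (Node u cs) (CImp j b)"
    "imp_tree (loc N (Node u cs) (CImp j b)) = imp_tree (Node u cs) + dlt (CImp j b)"
    "mset (labels (loc N (Node u cs) (CImp j b))) = mset (labels (Node u cs)) + {#N#}"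
proof -
  let ?L = "take j cs" and ?w = "cs ! j" and ?R = "drop (Suc j) cs"
  let ?P = "if b then [?w, Node u ?R] else [Node u ?R, ?w]"
  have jl: "j < length cs" "improper_at u cs j" using v by auto
  have cs: "cs = ?L @ ?w # ?R" using id_take_nth_drop[OF jl(1)] .
  have lL: "length ?L = j" using jl by simp
  have lt': "\<forall>x\<in>set (labels (Node u (?L @ ?w # ?R))). x < N" using lt cs by metis
  have d': "distinct (labels (Node u (?L @ ?w # ?R)))" using d cs by metis
  have imp': "improper_at u (?L @ ?w # ?R) (length ?L)" using jl(2) cs lL by metis
  have P: "?P = [?w, Node u ?R] \<or> ?P = [Node u ?R, ?w]" by simp
  note g = imp_local_gen[OF lt' d' imp' P]
  note f = imp_facts[OF d' imp']
  have lo: "loc N (Node u cs) (CImp j b) = Node N (?L @ ?P)" by simp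
  have ecP: "ec (map beta ?P) = eps (Node u cs) (CImp j b)" using f(3) by auto
  have icP: "ic N (map beta ?P) = dlt (CImp j b) + 1"
  proof -
    have "beta (Node u ?R) < N" using lt f(2) unfolding beta_Node by (simp add: Min_less_iff)
    moreover have "beta ?w < N" using f(2) lt by simp
    ultimately show ?thesis using f(3) by auto
  qed
  show "beta (loc N (Node u cs) (CImp j b)) = beta (Node u cs)"
    unfolding lo using g(1) cs by metis
  show "eld_tree (loc N (Node u cs) (CImp j b)) = eld_tree (Node u cs) + eps (Node u cs) (CImp j b)"
    unfolding lo using g(2) cs ecP by metis
  show "imp_tree (loc N (Node u cs) (CImp j b)) = imp_tree (Node u cs) + dlt (CImp j b)"
    unfolding lo using g(3) cs icP by (metis add.commute add_right_cancel add.left_commute)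
  show "mset (labels (loc N (Node u cs) (CImp j b))) = mset (labels (Node u cs)) + {#N#}"
    unfolding lo using g(4) cs by metis
qed


lemma loc_local:
  assumes lt: "\<forall>x\<in>set (labels s). x < N" and d: "distinct (labels s)" and v: "validc s c"
  shows "beta (loc N s c) = beta s \<and> eld_tree (loc N s c) = eld_tree s + eps s c \<and>
    imp_tree (loc N s c) = imp_tree s + dlt c \<and> mset (labels (loc N s c)) = mset (labels s) + {#N#}"
proof -
  obtain v cs where s: "s = Node v cs" by (cases s)
  show ?thesis
  proof (cases c)
    case (CLeaf i)
    then show ?thesis using leaf_local[of v cs N i] lt v s by simp
  next
    case CSub
    then show ?thesis using sub_local[OF lt] by simp
  next
    case (CImp j b)
    then show ?thesis using imp_local[of v cs N j b] lt d v s by simp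
  qed
qed

lemma loc_mset: "validc s c \<Longrightarrow> mset (labels (loc N s c)) = mset (labels s) + {#N#}"
proof (cases s)
  case (Node v cs)
  assume v: "validc s c"
  show ?thesis
  proof (cases c)
    case (CLeaf i)
    have "mset (concat (map labels cs)) = mset (concat (map labels (take i cs))) + mset (concat (map labels (drop i cs)))"
      by (subst (1) append_take_drop_id[symmetric, of cs i], simp only: map_append concat_append mset_append)
    then show ?thesis using Node CLeaf by simp
  next
    case CSub then show ?thesis by simp
  next
    case (CImp j b)
    have jl: "j < length cs" using v Node CImp by simp
    have cs: "cs = take j cs @ cs ! j # drop (Suc j) cs" using id_take_nth_drop[OF jl] .
    have "mset (concat (map labels cs)) = mset (concat (map labels (take j cs))) +
        mset (labels (cs ! j)) + mset (concat (map labels (drop (Suc j) cs)))"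
      by (subst (1) cs, simp)
    then show ?thesis using Node CImp by auto
  qed
qed

lemma transfer:
  assumes F: "plugT fs s = Node 0 F" and G: "plugT fs X = Node 0 G" and ne: "fs \<noteq> []"
    and b: "beta X = beta s" and rt: "root X = root s \<or> 2 \<le> length fs"
  shows "length G = length F" "\<forall>i<length F. root (G ! i) = root (F ! i)"
    "mset (concat (map labels G)) + mset (labels s) = mset (concat (map labels F)) + mset (labels X)"
    "improper_count G + imp_tree s = improper_count F + imp_tree X"
    "eld G + eld_tree s = eld F + eld_tree X"
proof -
  obtain f fs' where fs: "fs = f # fs'" using ne by (cases fs) auto
  obtain v Ls Rs where f: "f = Fr v Ls Rs" by (cases f)
  have FF: "F = Ls @ plugT fs' s # Rs" using F fs f by simp
  have GG: "G = Ls @ plugT fs' X # Rs" using G fs f by simp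
  show "length G = length F" using FF GG by simp
  have r: "root (plugT fs' X) = root (plugT fs' s)"
  proof (cases fs')
    case Nil then show ?thesis using rt fs by simp
  next
    case (Cons g gs) then show ?thesis by (cases g) simp
  qed
  show "\<forall>i<length F. root (G ! i) = root (F ! i)"
  proof (intro allI impI)
    fix i assume "i < length F"
    show "root (G ! i) = root (F ! i)"
    proof (cases "i < length Ls")
      case True then show ?thesis unfolding FF GG by (simp add: nth_append)
    next
      case False
      then obtain m where m: "i = length Ls + m" by (metis le_add_diff_inverse not_less)
      show ?thesis unfolding FF GG m using r by (cases m) (simp_all add: nth_append)
    qed
  qed
  have m1: "mset (labels (plugT fs' X)) + mset (labels s) = mset (labels (plugT fs' s)) + mset (labels X)"
    by (rule mset_plugT)
  show "mset (concat (map labels G)) + mset (labels s) = mset (concat (map labels F)) + mset (labels X)"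
    unfolding FF GG using m1 by (simp add: algebra_simps)
  have i1: "imp_tree (plugT fs' X) + imp_tree s = imp_tree (plugT fs' s) + imp_tree X"
    by (rule imp_plugT[OF b])
  show "improper_count G + imp_tree s = improper_count F + imp_tree X"
    unfolding FF GG improper_count_def using i1 by simp
  have e1: "eld_tree (plugT fs' X) + eld_tree s = eld_tree (plugT fs' s) + eld_tree X"
    by (rule eld_plugT[OF b])
  show "eld G + eld_tree s = eld F + eld_tree X"
    unfolding FF GG eld_def using e1 by simp
qed

lemma mset_forest: "(distinct xs \<and> set xs = {1..n}) \<longleftrightarrow> mset xs = mset_set {1..(n::nat)}"
proof
  assume "distinct xs \<and> set xs = {1..n}"
  then show "mset xs = mset_set {1..n}" using mset_set_set[of xs] by simp
next
  assume a: "mset xs = mset_set {1..n}"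
  have e: "mset_set {1..n} = mset [1..<Suc n]"
    by (simp only: mset_upt atLeastLessThanSuc_atLeastAtMost)
  have "distinct xs" using mset_eq_imp_distinct_iff[of xs "[1..<Suc n]"] a e by simp
  moreover have "set xs = {1..n}"
    using arg_cong[OF a, of set_mset] by simp
  ultimately show "distinct xs \<and> set xs = {1..n}" by simp
qed

lemma mset_set_Suc: "mset_set {1..Suc n} = mset_set {1..n} + {#Suc n#}"
proof -
  have "{1..Suc n} = insert (Suc n) {1..n}" by auto
  then show ?thesis by simp
qed

lemma forests_transfer:
  assumes F: "plugT fs s = Node 0 F" and G: "plugT fs X = Node 0 G" and ne: "fs \<noteq> []"
    and b: "beta X = beta s" and rt: "root X = root s \<or> 2 \<le> length fs"
    and m: "mset (labels X) = mset (labels s) + {#Suc n#}" and im: "imp_tree X = imp_tree s + d"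
  shows "F \<in> forests n k r \<longleftrightarrow> G \<in> forests (Suc n) (k + d) r"
proof -
  note t = transfer[OF F G ne b rt]
  have mG: "mset (concat (map labels G)) = mset (concat (map labels F)) + {#Suc n#}"
    using t(3) m by (metis add.assoc add.commute add_left_cancel)
  have iG: "improper_count G = improper_count F + d" using t(4) im by simp
  have lab: "(distinct (concat (map labels F)) \<and> set (concat (map labels F)) = {1..n}) \<longleftrightarrow>
     (distinct (concat (map labels G)) \<and> set (concat (map labels G)) = {1..Suc n})"
    unfolding mset_forest mG mset_set_Suc by simp
  show ?thesis unfolding forests_def using t(1) t(2) lab iG by auto
qed

lemma disjoint_nth:
  assumes d: "distinct (concat (map f xs))" and ij: "i < j" "j < length xs"
  shows "set (f (xs ! i)) \<inter> set (f (xs ! j)) = {}"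
proof -
  have xs: "xs = take j xs @ xs ! j # drop (Suc j) xs" using id_take_nth_drop[OF ij(2)] .
  have "distinct (concat (map f (take j xs @ xs ! j # drop (Suc j) xs)))" using d xs by metis
  then have dis: "set (concat (map f (take j xs))) \<inter> set (f (xs ! j)) = {}" by auto
  have "xs ! i \<in> set (take j xs)" using ij by (metis in_set_conv_nth length_take min.absorb4 nth_take)
  then have "set (f (xs ! i)) \<subseteq> set (concat (map f (take j xs)))" by auto
  then show ?thesis using dis by blast
qed

lemma root_in_labels: "root t \<in> set (labels t)"
  by (cases t) simp

lemma nonroot_gt:
  assumes F: "F \<in> forests n k r" and i: "i < r" and x: "x \<in> set (labels (F ! i))" and xi: "x \<noteq> i + 1"
  shows "r < x"
proof (rule ccontr)
  assume nx: "\<not> r < x"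
  have lF: "length F = r" and rt: "\<forall>i<r. root (F ! i) = i + 1"
    and d: "distinct (concat (map labels F))" and s: "set (concat (map labels F)) = {1..n}"
    using F by (auto simp: forests_def)
  have "x \<in> set (concat (map labels F))" using x i lF by (auto intro!: bexI[of _ "F ! i"])
  then have x1: "1 \<le> x" using s by auto
  let ?j = "x - 1"
  have j: "?j < r" "?j \<noteq> i" using nx x1 xi by auto
  have xj: "x \<in> set (labels (F ! ?j))" using root_in_labels[of "F ! ?j"] rt j x1 by simp
  show False
  proof (cases "i < ?j")
    case True
    then show False using disjoint_nth[OF d True] j lF x xj by auto
  next
    case False
    then have ji: "?j < i" using j by simp
    show False using disjoint_nth[OF d ji] i lF x xj by auto
  qed
qed

lemma top_no_improper:
  assumes F: "F \<in> forests n k r" and e: "plugT [Fr v Ls Rs] (Node u cs) = Node 0 F"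
    and j: "j < length cs"
  shows "\<not> improper_at u cs j"
proof -
  have FF: "F = Ls @ Node u cs # Rs" using e by simp
  have lF: "length F = r" and rt: "\<forall>i<r. root (F ! i) = i + 1"
    and d: "distinct (concat (map labels F))" using F by (auto simp: forests_def)
  let ?i = "length Ls"
  have i: "?i < r" "F ! ?i = Node u cs" using FF lF by auto
  have u: "u = ?i + 1" using rt i by force
  have dT: "distinct (labels (Node u cs))" using d FF by simp
  have c: "cs ! j \<in> set cs" using j by simp
  have bc: "beta (cs ! j) \<in> set (labels (Node u cs))" using beta_in[of "cs ! j"] c by auto
  have "u \<notin> set (concat (map labels cs))" using dT by simp
  then have "beta (cs ! j) \<noteq> u" using beta_in[of "cs ! j"] c by auto
  then have "r < beta (cs ! j)" using nonroot_gt[OF F i(1)] bc i(2) u by auto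
  then have "u < beta (cs ! j)" using u i by simp
  then show ?thesis unfolding improper_at_def by simp
qed


fun nfs :: "frame list \<Rightarrow> ptree \<Rightarrow> choice \<Rightarrow> frame list" where
  "nfs fs (Node v cs) (CLeaf i) = fs @ [Fr v (take i cs) (drop i cs)]"
| "nfs fs s CSub = fs"
| "nfs fs s (CImp j b) = fs"

fun nks :: "ptree \<Rightarrow> choice \<Rightarrow> ptree list" where
  "nks s (CLeaf i) = []"
| "nks s CSub = [s]"
| "nks (Node u cs) (CImp j b) = take j cs @
     (if b then [cs ! j, Node u (drop (Suc j) cs)] else [Node u (drop (Suc j) cs), cs ! j])"

lemma nform: "plugT fs (loc N s c) = plugT (nfs fs s c) (Node N (nks s c))"
  by (cases s; cases c) (simp_all add: plugT_append)

lemma imp_beta: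
  assumes v: "validc (Node u cs) (CImp j b)" and d: "distinct (labels (Node u cs))"
  shows "beta (cs ! j) < beta (Node u (drop (Suc j) cs))"
proof -
  have jl: "j < length cs" "improper_at u cs j" using v by auto
  have cs: "cs = take j cs @ cs ! j # drop (Suc j) cs" using id_take_nth_drop[OF jl(1)] .
  have lL: "length (take j cs) = j" using jl by simp
  have d': "distinct (labels (Node u (take j cs @ cs ! j # drop (Suc j) cs)))" using d cs by metis
  have imp': "improper_at u (take j cs @ cs ! j # drop (Suc j) cs) (length (take j cs))"
    using jl(2) cs lL by metis
  show ?thesis using imp_facts(3)[OF d' imp'] .
qed

lemma ins_inj:
  assumes e: "plugT fs (loc N s c) = plugT fs' (loc N s' c')"
    and d: "distinct (labels (plugT fs (loc N s c)))"
    and v: "validc s c" "validc s' c'" and ds: "distinct (labels s)" "distinct (labels s')"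
  shows "fs = fs' \<and> s = s' \<and> c = c'"
proof -
  have d2: "distinct (labels (plugT (nfs fs s c) (Node N (nks s c))))" using d nform by metis
  have e2: "plugT (nfs fs s c) (Node N (nks s c)) = plugT (nfs fs' s' c') (Node N (nks s' c'))"
    using e nform by metis
  have u: "nfs fs s c = nfs fs' s' c'" "nks s c = nks s' c'" using plugT_unique[OF d2 e2] by auto
  obtain v cs where s: "s = Node v cs" by (cases s)
  obtain v' cs' where s': "s' = Node v' cs'" by (cases s')
  show ?thesis
  proof (cases c)
    case (CLeaf i)
    show ?thesis
    proof (cases c')
      case (CLeaf i')
      have h: "fs = fs'" "v = v'" "take i cs = take i' cs'" "drop i cs = drop i' cs'"
        using u(1) s s' CLeaf \<open>c = CLeaf i\<close> by auto
      have l: "i \<le> length cs" "i' \<le> length cs'" using v s s' CLeaf \<open>c = CLeaf i\<close> by auto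
      have cs: "cs = cs'" using h(3,4) by (metis append_take_drop_id)
      have "i = i'" using h(3) l cs by (metis length_take min.absorb2)
      then show ?thesis using h cs s s' CLeaf \<open>c = CLeaf i\<close> by simp
    next
      case CSub then show ?thesis using u(2) \<open>c = CLeaf i\<close> by simp
    next
      case (CImp j' b')
      have "length (nks s c) = length (nks s' c')" using u(2) by simp
      then show ?thesis using CImp \<open>c = CLeaf i\<close> s' by (simp split: if_splits)
    qed
  next
    case CSub
    show ?thesis
    proof (cases c')
      case (CLeaf i') then show ?thesis using u(2) CSub by simp
    next
      case CSub then show ?thesis using u \<open>c = CSub\<close> by simp
    next
      case (CImp j' b')
      have "length (nks s c) = length (nks s' c')" using u(2) by simp
      then show ?thesis using CImp \<open>c = CSub\<close> s' by (simp split: if_splits)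
    qed
  next
    case (CImp j b)
    show ?thesis
    proof (cases c')
      case (CLeaf i') then show ?thesis using u(2) CImp s by (simp split: if_splits)
    next
      case CSub
      have "length (nks s c) = length (nks s' c')" using u(2) by simp
      then show ?thesis using CImp CSub s by (simp split: if_splits)
    next
      case (CImp j' b')
      have jl: "j < length cs" using v s \<open>c = CImp j b\<close> by simp
      have jl': "j' < length cs'" using v s' CImp by simp
      let ?R = "drop (Suc j) cs" and ?R' = "drop (Suc j') cs'"
      let ?P = "if b then [cs ! j, Node v ?R] else [Node v ?R, cs ! j]"
      let ?P' = "if b' then [cs' ! j', Node v' ?R'] else [Node v' ?R', cs' ! j']"
      have e3: "take j cs @ ?P = take j' cs' @ ?P'" using u(2) s s' CImp \<open>c = CImp j b\<close> by simp
      have lp: "length ?P = length ?P'" by simp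
      have tp0: "take j cs = take j' cs' \<and> ?P = ?P'"
        using e3 unfolding append_eq_append_conv[OF disjI2[OF lp]] .
      have tp: "take j cs = take j' cs'" "?P = ?P'" using tp0 by blast+
      have "length (take j cs) = length (take j' cs')" using tp(1) by (rule arg_cong)
      then have jj: "j = j'" using jl jl' by simp
      have ib: "beta (cs ! j) < beta (Node v ?R)"
        using imp_beta[of v cs j b] v ds s \<open>c = CImp j b\<close> by simp
      have ib': "beta (cs' ! j') < beta (Node v' ?R')"
        using imp_beta[of v' cs' j' b'] v ds s' CImp by simp
      have bb: "b = b'"
      proof (rule ccontr)
        assume nb: "b \<noteq> b'"
        have h: "cs ! j = Node v' ?R' \<and> Node v ?R = cs' ! j'"
        proof (cases b)
          case True
          then have "[cs ! j, Node v ?R] = [Node v' ?R', cs' ! j']" using tp(2) nb by simp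
          then show ?thesis by simp
        next
          case False
          then have "[Node v ?R, cs ! j] = [cs' ! j', Node v' ?R']" using tp(2) nb by simp
          then show ?thesis by simp
        qed
        then have "beta (Node v ?R) = beta (cs' ! j')" "beta (Node v' ?R') = beta (cs ! j)"
          by simp_all
        then show False using ib ib' by linarith
      qed
      have eq: "cs ! j = cs' ! j' \<and> v = v' \<and> ?R = ?R'"
      proof (cases b)
        case True
        then have "[cs ! j, Node v ?R] = [cs' ! j', Node v' ?R']" using tp(2) bb by simp
        then show ?thesis by simp
      next
        case False
        then have "[Node v ?R, cs ! j] = [Node v' ?R', cs' ! j']" using tp(2) bb by simp
        then show ?thesis by simp
      qed
      have "cs = take j cs @ cs ! j # ?R" by (rule id_take_nth_drop[OF jl])
      also have "\<dots> = take j' cs' @ cs' ! j' # ?R'" using tp(1) eq by simp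
      also have "\<dots> = cs'" by (rule id_take_nth_drop[OF jl', symmetric])
      finally have "cs = cs'" .
      moreover have "fs = fs'" using u(1) CImp \<open>c = CImp j b\<close> by simp
      moreover have "v = v'" using eq by blast
      ultimately show ?thesis using s s' CImp \<open>c = CImp j b\<close> jj bb by simp
    qed
  qed
qed


lemma loc_labels:
  assumes v: "validc s c" and d: "distinct (labels (loc N s c))"
    and le: "\<forall>x\<in>set (labels (loc N s c)). x \<le> N"
  shows "distinct (labels s) \<and> (\<forall>x\<in>set (labels s). x < N)"
proof -
  have m: "mset (labels (loc N s c)) = mset (labels s @ [N])" using loc_mset[OF v] by simp
  have "distinct (labels s @ [N])" using mset_eq_imp_distinct_iff[OF m] d by simp
  then have ds: "distinct (labels s)" "N \<notin> set (labels s)" by auto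
  have sub: "set (labels s) \<subseteq> set (labels (loc N s c))" using arg_cong[OF m, of set_mset] by auto
  have "\<forall>x\<in>set (labels s). x < N"
  proof
    fix x assume x: "x \<in> set (labels s)"
    then have "x \<le> N" using sub le by blast
    moreover have "x \<noteq> N" using x ds(2) by blast
    ultimately show "x < N" by simp
  qed
  then show ?thesis using ds by simp
qed

lemma two_last: "2 \<le> length cs \<Longrightarrow> \<exists>L x y. cs = L @ [x, y]"
proof -
  assume l: "2 \<le> length cs"
  obtain ys y where cs: "cs = ys @ [y]" using l by (metis length_0_conv not_numeral_le_zero rev_exhaust)
  have "ys \<noteq> []" using l cs by auto
  then obtain L x where "ys = L @ [x]" by (metis rev_exhaust)
  then show ?thesis using cs by auto
qed

lemma ins_surj:
  assumes G: "G \<in> forests (Suc n) k r" and rn: "r \<le> n"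
  shows "\<exists>fs s c. plugT fs (loc (Suc n) s c) = Node 0 G \<and> fs \<noteq> [] \<and> validc s c \<and>
     (c = CSub \<longrightarrow> 2 \<le> length fs) \<and> (root (loc (Suc n) s c) = root s \<or> 2 \<le> length fs) \<and>
     distinct (labels s) \<and> (\<forall>x\<in>set (labels s). x < Suc n)"
proof -
  define N where "N = Suc n"
  have lG: "length G = r" and rt: "\<forall>i<r. root (G ! i) = i + 1"
    and d: "distinct (concat (map labels G))" and st: "set (concat (map labels G)) = {1..N}"
    using G by (auto simp: forests_def N_def)
  have d0: "distinct (labels (Node 0 G))" using d st by auto
  have le0: "\<forall>x\<in>set (labels (Node 0 G)). x \<le> N" using st by auto
  have "N \<in> set (labels (Node 0 G))" using st by (simp add: N_def)
  then obtain fs cs where dec: "Node 0 G = plugT fs (Node N cs)" using plugT_exists by blast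
  have fsne: "fs \<noteq> []"
  proof
    assume "fs = []" then show False using dec by (simp add: N_def)
  qed
  have len2: "2 \<le> length fs"
  proof (rule ccontr)
    assume n2: "\<not> 2 \<le> length fs"
    have "length fs \<noteq> 0" using fsne by simp
    then have "length fs = 1" using n2 by linarith
    then obtain f where f: "fs = [f]" by (metis One_nat_def length_0_conv length_Suc_conv)
    obtain v Ls Rs where ff: "f = Fr v Ls Rs" by (cases f)
    have GG: "G = Ls @ Node N cs # Rs" using dec f ff by simp
    have i: "length Ls < r" using GG lG by simp
    have "root (G ! length Ls) = length Ls + 1" using rt i by simp
    moreover have "root (G ! length Ls) = N" using GG by simp
    ultimately show False using i rn N_def by simp
  qed
  have dN: "distinct (labels (plugT fs (Node N cs)))" using d0 dec by simp
  have leN: "\<forall>x\<in>set (labels (plugT fs (Node N cs))). x \<le> N" using le0 dec by simp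
  have key: "\<exists>fs' s c. plugT fs' (loc N s c) = plugT fs (Node N cs) \<and> fs' \<noteq> [] \<and> validc s c \<and>
     (c = CSub \<longrightarrow> 2 \<le> length fs') \<and> (root (loc N s c) = root s \<or> 2 \<le> length fs')"
  proof (cases "length cs")
    case 0
    then have Nil: "cs = []" by simp
    obtain fs0 f where fs: "fs = fs0 @ [f]" using fsne by (metis rev_exhaust)
    obtain v L R where ff: "f = Fr v L R" by (cases f)
    have fs0: "fs0 \<noteq> []" using len2 fs by auto
    have lo: "loc N (Node v (L @ R)) (CLeaf (length L)) = plugT [Fr v L R] (Node N [])" by simp
    have "plugT fs0 (loc N (Node v (L @ R)) (CLeaf (length L))) = plugT fs (Node N cs)"
      unfolding lo fs ff Nil plugT_append ..
    moreover have "validc (Node v (L @ R)) (CLeaf (length L))" by simp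
    moreover have "root (loc N (Node v (L @ R)) (CLeaf (length L))) = root (Node v (L @ R))" by simp
    ultimately show ?thesis using fs0
      by (intro exI[of _ fs0] exI[of _ "Node v (L @ R)"] exI[of _ "CLeaf (length L)"]) simp
  next
    case (Suc m)
    show ?thesis
    proof (cases m)
      case 0
      then obtain a where "cs = [a]" using Suc by (metis One_nat_def length_0_conv length_Suc_conv)
      then show ?thesis using fsne len2
        by (intro exI[of _ fs] exI[of _ a] exI[of _ CSub]) simp
    next
      case (Suc m')
      then have "2 \<le> length cs" using \<open>length cs = Suc m\<close> by simp
      then obtain L x y where cs: "cs = L @ [x, y]" using two_last by blast
      have dcs: "distinct (labels (Node N (L @ [x, y])))" using distinct_plugT[OF dN] cs by simp
      have "distinct (labels x @ labels y)" using dcs by simp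
      then have dxy: "set (labels x) \<inter> set (labels y) = {}" by simp
      have bne: "beta x \<noteq> beta y" using dxy beta_in[of x] beta_in[of y] by auto
      show ?thesis
      proof (cases "beta x < beta y")
        case True
        obtain u R where y: "y = Node u R" by (cases y)
        let ?s = "Node u (L @ x # R)" and ?c = "CImp (length L) True"
        have lo: "loc N ?s ?c = Node N (L @ [x, y])" using y by simp
        have bu: "beta x < u" "\<forall>c\<in>set R. beta x < beta c"
          using True unfolding y beta_Node by simp_all
        have "improper_at u (L @ x # R) (length L)"
          unfolding improper_at_split using bu by (auto dest: less_asym)
        then have vi: "validc ?s ?c" by simp
        show ?thesis using lo vi len2 cs fsne
          by (intro exI[of _ fs] exI[of _ ?s] exI[of _ ?c]) simp
      next
        case False
        then have lt: "beta y < beta x" using bne by simp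
        obtain u R where x: "x = Node u R" by (cases x)
        let ?s = "Node u (L @ y # R)" and ?c = "CImp (length L) False"
        have lo: "loc N ?s ?c = Node N (L @ [x, y])" using x by simp
        have bu: "beta y < u" "\<forall>c\<in>set R. beta y < beta c"
          using lt unfolding x beta_Node by simp_all
        have "improper_at u (L @ y # R) (length L)"
          unfolding improper_at_split using bu by (auto dest: less_asym)
        then have vi: "validc ?s ?c" by simp
        show ?thesis using lo vi len2 cs fsne
          by (intro exI[of _ fs] exI[of _ ?s] exI[of _ ?c]) simp
      qed
    qed
  qed
  then obtain fs' s c where k: "plugT fs' (loc N s c) = plugT fs (Node N cs)" "fs' \<noteq> []" "validc s c"
     "c = CSub \<longrightarrow> 2 \<le> length fs'" "root (loc N s c) = root s \<or> 2 \<le> length fs'"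
    by blast
  have dl: "distinct (labels (loc N s c))" using distinct_plugT[of fs' "loc N s c"] dN k(1) by simp
  have ll: "\<forall>x\<in>set (labels (loc N s c)). x \<le> N"
    using labels_plugT_sub[of "loc N s c" fs'] leN k(1) by auto
  have "distinct (labels s) \<and> (\<forall>x\<in>set (labels s). x < N)" by (rule loc_labels[OF k(3) dl ll])
  then show ?thesis using k dec unfolding N_def
    by (intro exI[of _ fs'] exI[of _ s] exI[of _ c]) simp
qed


lemma finite_trees: "finite A \<Longrightarrow> finite {t. set (labels t) \<subseteq> A \<and> length (labels t) \<le> m}"
proof (induction m)
  case 0
  have "{t. set (labels t) \<subseteq> A \<and> length (labels t) \<le> 0} = {}" by auto
  then show ?case by simp
next
  case (Suc m)
  let ?T = "{t. set (labels t) \<subseteq> A \<and> length (labels t) \<le> m}"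
  have "{t. set (labels t) \<subseteq> A \<and> length (labels t) \<le> Suc m} \<subseteq>
      (\<lambda>(v, cs). Node v cs) ` (A \<times> {cs. set cs \<subseteq> ?T \<and> length cs \<le> m})"
  proof
    fix t assume t: "t \<in> {t. set (labels t) \<subseteq> A \<and> length (labels t) \<le> Suc m}"
    obtain v cs where tv: "t = Node v cs" by (cases t)
    have len: "length (labels t) = Suc (sum_list (map (\<lambda>c. length (labels c)) cs))"
      unfolding tv by (simp add: length_concat o_def)
    have s: "sum_list (map (\<lambda>c. length (labels c)) cs) \<le> m" using t len by simp
    have "length cs \<le> sum_list (map (\<lambda>c. length (labels c)) cs)"
    proof -
      have "\<forall>c\<in>set cs. 1 \<le> length (labels c)" by (simp add: Suc_le_eq)
      then have "sum_list (map (\<lambda>c. 1::nat) cs) \<le> sum_list (map (\<lambda>c. length (labels c)) cs)"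
        by (intro sum_list_mono) simp
      then show ?thesis by (simp add: sum_list_triv)
    qed
    then have lc: "length cs \<le> m" using s by simp
    have "set cs \<subseteq> ?T"
    proof
      fix c assume c: "c \<in> set cs"
      have "length (labels c) \<le> sum_list (map (\<lambda>c. length (labels c)) cs)"
        using c by (intro member_le_sum_list) auto
      moreover have "set (labels c) \<subseteq> A" using t c tv by auto
      ultimately show "c \<in> ?T" using s by simp
    qed
    moreover have "v \<in> A" using t tv by simp
    ultimately show "t \<in> (\<lambda>(v, cs). Node v cs) ` (A \<times> {cs. set cs \<subseteq> ?T \<and> length cs \<le> m})"
      using tv lc by force
  qed
  moreover have "finite (A \<times> {cs. set cs \<subseteq> ?T \<and> length cs \<le> m})"
    using Suc by (intro finite_SigmaI finite_lists_length_le) simp_all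
  ultimately show ?case by (meson finite_imageI finite_subset)
qed

lemma finite_forests: "finite (forests n k r)"
proof -
  let ?T = "{t. set (labels t) \<subseteq> {1..n} \<and> length (labels t) \<le> n}"
  have "forests n k r \<subseteq> {F. set F \<subseteq> ?T \<and> length F = r}"
  proof
    fix F assume F: "F \<in> forests n k r"
    have d: "distinct (concat (map labels F))" and s: "set (concat (map labels F)) = {1..n}"
      and l: "length F = r" using F by (auto simp: forests_def)
    have ln: "length (concat (map labels F)) = n" using distinct_card[OF d] s by simp
    have "set F \<subseteq> ?T"
    proof
      fix t assume t: "t \<in> set F"
      have "length (labels t) \<le> sum_list (map length (map labels F))"
        using t by (intro member_le_sum_list) auto
      then have "length (labels t) \<le> n" using ln by (simp add: length_concat)
      moreover have "set (labels t) \<subseteq> {1..n}" using t s by auto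
      ultimately show "t \<in> ?T" by simp
    qed
    then show "F \<in> {F. set F \<subseteq> ?T \<and> length F = r}" using l by simp
  qed
  moreover have "finite {F. set F \<subseteq> ?T \<and> length F = r}"
    by (intro finite_lists_length_eq finite_trees) simp
  ultimately show ?thesis by (rule finite_subset)
qed

section \<open>The bijection\<close>

definition Dec :: "ptree list \<Rightarrow> (frame list \<times> ptree) set" where
  "Dec F = {x \<in> DecT (Node 0 F). fst x \<noteq> []}"

definition C0 :: "frame list \<times> ptree \<Rightarrow> choice set" where
  "C0 x = {c. validc (snd x) c \<and> dlt c = 0}"

definition C1 :: "frame list \<times> ptree \<Rightarrow> choice set" where
  "C1 x = {c. validc (snd x) c \<and> dlt c = 1 \<and> (c = CSub \<longrightarrow> 2 \<le> length (fst x))}"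

definition EE :: "nat \<Rightarrow> nat \<Rightarrow> nat \<Rightarrow> (ptree list \<times> (frame list \<times> ptree) \<times> choice) set" where
  "EE n k r = (SIGMA F:forests n k r. SIGMA d:Dec F. C0 d) \<union>
     (if k = 0 then {} else SIGMA F:forests n (k - 1) r. SIGMA d:Dec F. C1 d)"

definition Psi :: "nat \<Rightarrow> ptree list \<times> (frame list \<times> ptree) \<times> choice \<Rightarrow> ptree list" where
  "Psi N y = kids (plugT (fst (fst (snd y))) (loc N (snd (fst (snd y))) (snd (snd y))))"

lemma dlt_01: "dlt c = 0 \<or> dlt c = 1"
  by (cases c) auto

lemma EE_char: "(F, (fs, s), c) \<in> EE n k r \<longleftrightarrow>
   (F \<in> forests n (k - dlt c) r \<and> dlt c \<le> k \<and> plugT fs s = Node 0 F \<and> fs \<noteq> [] \<and> validc s c \<and>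
    (c = CSub \<longrightarrow> 2 \<le> length fs))"
proof (cases "dlt c = 0")
  case True
  have "c \<noteq> CSub" using True by auto
  then show ?thesis using True unfolding EE_def Dec_def C0_def C1_def DecT_def by auto
next
  case False
  then have d1: "dlt c = 1" using dlt_01[of c] by simp
  show ?thesis using d1 unfolding EE_def Dec_def C0_def C1_def DecT_def by auto
qed

lemma plug_kids: "fs \<noteq> [] \<Longrightarrow> plugT fs s = Node 0 F \<Longrightarrow> plugT fs X = Node 0 (kids (plugT fs X))"
proof -
  assume ne: "fs \<noteq> []" and e: "plugT fs s = Node 0 F"
  obtain f fs' where fs: "fs = f # fs'" using ne by (cases fs) auto
  obtain v L R where f: "f = Fr v L R" by (cases f)
  have "v = 0" using e fs f by simp
  then show ?thesis using fs f by simp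
qed

lemma forest_labels:
  assumes F: "F \<in> forests n k r" and e: "plugT fs s = Node 0 F"
  shows "distinct (labels s) \<and> (\<forall>x\<in>set (labels s). x < Suc n)"
proof -
  have d: "distinct (concat (map labels F))" and st: "set (concat (map labels F)) = {1..n}"
    using F by (auto simp: forests_def)
  have d0: "distinct (labels (plugT fs s))" using d st e by auto
  have "set (labels s) \<subseteq> set (labels (plugT fs s))" by (rule labels_plugT_sub)
  then have "\<forall>x\<in>set (labels s). x < Suc n" using e st by auto
  then show ?thesis using distinct_plugT[OF d0] by simp
qed

lemma root_cond:
  assumes F: "F \<in> forests n k r" and e: "plugT fs s = Node 0 F" and ne: "fs \<noteq> []"
    and v: "validc s c" and cs: "c = CSub \<longrightarrow> 2 \<le> length fs"
  shows "root (loc N s c) = root s \<or> 2 \<le> length fs"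
proof (cases c)
  case (CLeaf i) then show ?thesis by (cases s) simp
next
  case CSub then show ?thesis using cs by simp
next
  case (CImp j b)
  show ?thesis
  proof (rule ccontr)
    assume n: "\<not> (root (loc N s c) = root s \<or> 2 \<le> length fs)"
    then have "length fs \<noteq> 0" "\<not> 2 \<le> length fs" using ne by auto
    then have "length fs = 1" by linarith
    then obtain f where f: "fs = [f]" by (metis One_nat_def length_0_conv length_Suc_conv)
    obtain v' Ls Rs where ff: "f = Fr v' Ls Rs" by (cases f)
    obtain u cs where s: "s = Node u cs" by (cases s)
    have j: "j < length cs" "improper_at u cs j" using v s CImp by auto
    have e1: "plugT [Fr v' Ls Rs] (Node u cs) = Node 0 F" using e f ff s by simp
    have "\<not> improper_at u cs j" by (rule top_no_improper[OF F e1 j(1)])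
    then show False using j by simp
  qed
qed

lemma EE_props:
  assumes y: "(F, (fs, s), c) \<in> EE n k r"
  shows "Psi (Suc n) (F, (fs, s), c) \<in> forests (Suc n) k r \<and>
    eld (Psi (Suc n) (F, (fs, s), c)) = eld F + eps s c"
proof -
  let ?N = "Suc n"
  let ?X = "loc ?N s c"
  let ?G = "Psi ?N (F, (fs, s), c)"
  have h: "F \<in> forests n (k - dlt c) r" "dlt c \<le> k" "plugT fs s = Node 0 F" "fs \<noteq> []" "validc s c"
    "c = CSub \<longrightarrow> 2 \<le> length fs" using y unfolding EE_char by auto
  have G: "plugT fs ?X = Node 0 ?G" unfolding Psi_def using plug_kids[OF h(4) h(3)] by simp
  have fl: "distinct (labels s) \<and> (\<forall>x\<in>set (labels s). x < ?N)" by (rule forest_labels[OF h(1) h(3)])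
  note ll = loc_local[of s ?N c] fl h(5)
  have rc: "root ?X = root s \<or> 2 \<le> length fs" by (rule root_cond[OF h(1) h(3) h(4) h(5) h(6)])
  have tr: "F \<in> forests n (k - dlt c) r \<longleftrightarrow> ?G \<in> forests ?N (k - dlt c + dlt c) r"
    by (rule forests_transfer[OF h(3) G h(4)]) (use ll rc in auto)
  have "?G \<in> forests ?N k r" using tr h(1,2) by simp
  moreover have "eld ?G + eld_tree s = eld F + eld_tree ?X"
    by (rule transfer(5)[OF h(3) G h(4)]) (use ll rc in auto)
  ultimately show ?thesis using ll by simp
qed

lemma Psi_bij:
  assumes rn: "r \<le> n"
  shows "bij_betw (Psi (Suc n)) (EE n k r) (forests (Suc n) k r)"
proof (rule bij_betwI')
  fix y y' assume y: "y \<in> EE n k r" and y': "y' \<in> EE n k r"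
  obtain F fs s c where yy: "y = (F, (fs, s), c)" by (metis prod.exhaust)
  obtain F' fs' s' c' where yy': "y' = (F', (fs', s'), c')" by (metis prod.exhaust)
  have h: "F \<in> forests n (k - dlt c) r" "plugT fs s = Node 0 F" "fs \<noteq> []" "validc s c"
    using y unfolding yy EE_char by auto
  have h': "F' \<in> forests n (k - dlt c') r" "plugT fs' s' = Node 0 F'" "fs' \<noteq> []" "validc s' c'"
    using y' unfolding yy' EE_char by auto
  show "(Psi (Suc n) y = Psi (Suc n) y') = (y = y')"
  proof
    assume e: "Psi (Suc n) y = Psi (Suc n) y'"
    let ?G = "Psi (Suc n) y"
    have G: "plugT fs (loc (Suc n) s c) = Node 0 ?G"
      unfolding yy Psi_def using plug_kids[OF h(3) h(2)] by simp
    have G'0: "plugT fs' (loc (Suc n) s' c') = Node 0 (Psi (Suc n) y')"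
      unfolding yy' Psi_def using plug_kids[OF h'(3) h'(2)] by simp
    have G': "plugT fs' (loc (Suc n) s' c') = Node 0 ?G" using G'0 e by simp
    have Gf: "?G \<in> forests (Suc n) k r" using EE_props y unfolding yy by blast
    have dG: "distinct (labels (Node 0 ?G))" using Gf by (auto simp: forests_def)
    have fl: "distinct (labels s)" "distinct (labels s')"
      using forest_labels[OF h(1) h(2)] forest_labels[OF h'(1) h'(2)] by auto
    have "fs = fs' \<and> s = s' \<and> c = c'"
      by (rule ins_inj[of fs "Suc n" s c fs' s' c']) (use G G' dG h(4) h'(4) fl in auto)
    moreover then have "F = F'" using h(2) h'(2) by simp
    ultimately show "y = y'" using yy yy' by simp
  qed simp
next
  fix y assume "y \<in> EE n k r"
  then show "Psi (Suc n) y \<in> forests (Suc n) k r"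
    using EE_props by (metis prod.exhaust)
next
  fix G assume G: "G \<in> forests (Suc n) k r"
  obtain fs s c where h: "plugT fs (loc (Suc n) s c) = Node 0 G" "fs \<noteq> []" "validc s c"
     "c = CSub \<longrightarrow> 2 \<le> length fs" "root (loc (Suc n) s c) = root s \<or> 2 \<le> length fs"
     "distinct (labels s)" "\<forall>x\<in>set (labels s). x < Suc n"
    using ins_surj[OF G rn] by blast
  define F where "F = kids (plugT fs s)"
  have F: "plugT fs s = Node 0 F" unfolding F_def using plug_kids[OF h(2) h(1)] by simp
  note ll = loc_local[of s "Suc n" c] h(6,7) h(3)
  have im: "improper_count G + imp_tree s = improper_count F + imp_tree (loc (Suc n) s c)"
    by (rule transfer(4)[OF F h(1) h(2)]) (use ll h(5) in auto)
  have gi: "improper_count G = k" using G by (simp add: forests_def)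
  have dk: "dlt c \<le> k" using im gi ll by simp
  have tr: "F \<in> forests n (k - dlt c) r \<longleftrightarrow> G \<in> forests (Suc n) (k - dlt c + dlt c) r"
    by (rule forests_transfer[OF F h(1) h(2)]) (use ll h(5) in auto)
  have Ff: "F \<in> forests n (k - dlt c) r" using tr dk G by simp
  have "(F, (fs, s), c) \<in> EE n k r" unfolding EE_char using Ff dk F h by simp
  moreover have "Psi (Suc n) (F, (fs, s), c) = G" unfolding Psi_def using h(1) by simp
  ultimately show "\<exists>y\<in>EE n k r. G = Psi (Suc n) y" by metis
qed


definition Ch :: "nat \<Rightarrow> choice set" where
  "Ch L = insert CSub (CLeaf ` {..L} \<union> (\<lambda>(j, b). CImp j b) ` ({..L} \<times> UNIV))"

lemma finite_Ch: "finite (Ch L)"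
  unfolding Ch_def by simp

lemma validc_Ch: "validc s c \<Longrightarrow> c \<in> Ch (length (kids s))"
proof -
  assume v: "validc s c"
  obtain v' cs where s: "s = Node v' cs" by (cases s)
  show ?thesis
  proof (cases c)
    case (CLeaf i) then show ?thesis using v s by (simp add: Ch_def)
  next
    case CSub then show ?thesis by (simp add: Ch_def)
  next
    case (CImp j b)
    then have "j \<le> length cs" using v s by simp
    then show ?thesis using CImp s unfolding Ch_def by (auto intro!: image_eqI[of _ _ "(j, b)"])
  qed
qed

lemma finite_C0: "finite (C0 x)"
  by (rule finite_subset[OF _ finite_Ch[of "length (kids (snd x))"]]) (auto simp: C0_def validc_Ch)

lemma finite_C1: "finite (C1 x)"
  by (rule finite_subset[OF _ finite_Ch[of "length (kids (snd x))"]]) (auto simp: C1_def validc_Ch)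

lemma finite_Dec: "finite (Dec F)"
  unfolding Dec_def using finite_DecT by simp

lemma C0_eq: "C0 (fs, Node v cs) = CLeaf ` {..length cs} \<union>
    (\<lambda>j. CImp j False) ` {j. j < length cs \<and> improper_at v cs j}"
proof (rule set_eqI)
  fix c show "c \<in> C0 (fs, Node v cs) \<longleftrightarrow> c \<in> CLeaf ` {..length cs} \<union>
    (\<lambda>j. CImp j False) ` {j. j < length cs \<and> improper_at v cs j}"
    by (cases c) (auto simp: C0_def)
qed

lemma C1_eq: "C1 (fs, Node v cs) = (if 2 \<le> length fs then {CSub} else {}) \<union>
    (\<lambda>j. CImp j True) ` {j. j < length cs \<and> improper_at v cs j}"
proof (rule set_eqI)
  fix c show "c \<in> C1 (fs, Node v cs) \<longleftrightarrow> c \<in> (if 2 \<le> length fs then {CSub} else {}) \<union>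
    (\<lambda>j. CImp j True) ` {j. j < length cs \<and> improper_at v cs j}"
    by (cases c) (auto simp: C1_def)
qed

lemma sum_C0:
  fixes t :: real
  shows "(\<Sum>c\<in>C0 (fs, s). t ^ (e + eps s c)) =
    t ^ e * (1 + t * real (length (kids s)) + t * real (ic (root s) (map beta (kids s))))"
proof -
  obtain v cs where s: "s = Node v cs" by (cases s)
  let ?A = "CLeaf ` {..length cs}" and ?B = "(\<lambda>j. CImp j False) ` {j. j < length cs \<and> improper_at v cs j}"
  have dis: "?A \<inter> ?B = {}" by auto
  have sA: "(\<Sum>c\<in>?A. t ^ (e + eps s c)) = t ^ e + real (length cs) * t ^ Suc e"
  proof -
    have "(\<Sum>c\<in>?A. t ^ (e + eps s c)) = (\<Sum>i\<in>{..length cs}. t ^ (e + eps s (CLeaf i)))"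
      by (subst sum.reindex) (auto simp: inj_on_def)
    also have "\<dots> = t ^ e + (\<Sum>i<length cs. t ^ (e + eps s (CLeaf i)))"
      by (simp add: lessThan_Suc_atMost[symmetric] s)
    also have "(\<Sum>i<length cs. t ^ (e + eps s (CLeaf i))) = (\<Sum>i<length cs. t ^ Suc e)"
      by (rule sum.cong) (auto simp: s)
    finally show ?thesis by simp
  qed
  have sB: "(\<Sum>c\<in>?B. t ^ (e + eps s c)) = real (ic v (map beta cs)) * t ^ Suc e"
  proof -
    have "(\<Sum>c\<in>?B. t ^ (e + eps s c)) = (\<Sum>j\<in>{j. j < length cs \<and> improper_at v cs j}. t ^ Suc e)"
      by (subst sum.reindex) (auto simp: inj_on_def s)
    also have "\<dots> = real (card {j. j < length cs \<and> improper_at v cs j}) * t ^ Suc e" by simp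
    finally show ?thesis by (simp add: card_improper)
  qed
  have "(\<Sum>c\<in>C0 (fs, s). t ^ (e + eps s c)) = (\<Sum>c\<in>?A. t ^ (e + eps s c)) + (\<Sum>c\<in>?B. t ^ (e + eps s c))"
    unfolding s C0_eq by (rule sum.union_disjoint) (simp_all add: dis)
  then show ?thesis using sA sB s by (simp add: algebra_simps)
qed

lemma sum_C1:
  fixes t :: real
  shows "(\<Sum>c\<in>C1 (fs, s). t ^ (e + eps s c)) =
    t ^ e * ((if 2 \<le> length fs then 1 else 0) + real (ic (root s) (map beta (kids s))))"
proof -
  obtain v cs where s: "s = Node v cs" by (cases s)
  let ?A = "(if 2 \<le> length fs then {CSub} else {})"
  let ?B = "(\<lambda>j. CImp j True) ` {j. j < length cs \<and> improper_at v cs j}"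
  have dis: "?A \<inter> ?B = {}" by auto
  have sA: "(\<Sum>c\<in>?A. t ^ (e + eps s c)) = (if 2 \<le> length fs then t ^ e else 0)" by simp
  have sB: "(\<Sum>c\<in>?B. t ^ (e + eps s c)) = real (ic v (map beta cs)) * t ^ e"
  proof -
    have "(\<Sum>c\<in>?B. t ^ (e + eps s c)) = (\<Sum>j\<in>{j. j < length cs \<and> improper_at v cs j}. t ^ e)"
      by (subst sum.reindex) (auto simp: inj_on_def s)
    also have "\<dots> = real (card {j. j < length cs \<and> improper_at v cs j}) * t ^ e" by simp
    finally show ?thesis by (simp add: card_improper)
  qed
  have "(\<Sum>c\<in>C1 (fs, s). t ^ (e + eps s c)) = (\<Sum>c\<in>?A. t ^ (e + eps s c)) + (\<Sum>c\<in>?B. t ^ (e + eps s c))"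
    unfolding s C1_eq by (rule sum.union_disjoint) (simp_all add: dis)
  then show ?thesis using sA sB s by (simp add: algebra_simps)
qed

lemma Dec_sum: "sum g (Dec F) = (\<Sum>x\<in>DecT (Node 0 F). if fst x = [] then 0 else g x)"
  unfolding Dec_def by (simp add: sum.inter_filter[OF finite_DecT]) (intro sum.cong refl, simp)

lemma Dec_sum_snd: "(\<Sum>x\<in>Dec F. g (snd x)) + g (Node 0 F) = subsum g (Node 0 F)"
  unfolding Dec_sum using sum_DecT_nonroot[where t="Node 0 F" and g=g] by simp

lemma forest_len:
  assumes "F \<in> forests n k r"
  shows "length (concat (map labels F)) = n" "length F = r" "improper_count F = k"
proof -
  have d: "distinct (concat (map labels F))" and s: "set (concat (map labels F)) = {1..n}"
    using assms by (auto simp: forests_def)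
  show "length (concat (map labels F)) = n" using distinct_card[OF d] s by simp
  show "length F = r" "improper_count F = k" using assms by (auto simp: forests_def)
qed

lemma L1: "F \<in> forests n k r \<Longrightarrow> (\<Sum>x\<in>Dec F. (1::nat)) = n"
  using Dec_sum_snd[of "\<lambda>_. 1::nat" F] subsum_one[of "Node 0 F"] forest_len[of F n k r]
  by (simp add: length_concat)

lemma L2: "F \<in> forests n k r \<Longrightarrow> (\<Sum>x\<in>Dec F. length (kids (snd x))) + r = n"
  using Dec_sum_snd[of "\<lambda>s. length (kids s)" F] subsum_kids[of "Node 0 F"] forest_len[of F n k r]
  by (simp add: length_concat)

lemma L3: "F \<in> forests n k r \<Longrightarrow> (\<Sum>x\<in>Dec F. ic (root (snd x)) (map beta (kids (snd x)))) = k"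
  using Dec_sum_snd[of "\<lambda>s. ic (root s) (map beta (kids s))" F] subsum_imp[of "Node 0 F"]
    forest_len[of F n k r]
  by (simp add: improper_count_def)

lemma L4: "F \<in> forests n k r \<Longrightarrow> (\<Sum>x\<in>Dec F. if 2 \<le> length (fst x) then 1 else 0) + r = (n::nat)"
proof -
  assume F: "F \<in> forests n k r"
  let ?h = "\<lambda>x. if 2 \<le> length (fst x) then 1 else (0::nat)"
  have "(\<Sum>x\<in>Dec F. ?h x) = (\<Sum>x\<in>DecT (Node 0 F). ?h x)"
    unfolding Dec_sum by (rule sum.cong) auto
  also have "\<dots> = (\<Sum>i<length F. \<Sum>x\<in>DecT (F ! i). ?h (frm 0 F i x))"
    by (simp add: sum_DecT)
  also have "\<dots> = (\<Sum>i<length F. \<Sum>x\<in>DecT (F ! i). if fst x = [] then 0 else 1)"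
    by (intro sum.cong refl) (auto simp: frm_def Suc_le_eq)
  finally have e: "(\<Sum>x\<in>Dec F. ?h x) = (\<Sum>i<length F. \<Sum>x\<in>DecT (F ! i). if fst x = [] then 0 else 1)" .
  define A where "A i = (\<Sum>x\<in>DecT (F ! i). if fst x = [] then 0 else (1::nat))" for i
  have each: "\<And>i. A i + 1 = length (labels (F ! i))"
    unfolding A_def using sum_DecT_nonroot[where g="\<lambda>_. 1::nat"] subsum_one by simp
  have "(\<Sum>i<length F. A i + 1) = (\<Sum>i<length F. A i) + (\<Sum>i<length F. 1)"
    by (rule sum.distrib)
  then have "(\<Sum>i<length F. A i) + length F = (\<Sum>i<length F. A i + 1)" by simp
  also have "\<dots> = (\<Sum>i<length F. length (labels (F ! i)))" using each by simp
  also have "\<dots> = length (concat (map labels F))"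
    by (simp add: length_concat sum_list_map_nth)
  finally have "(\<Sum>i<length F. A i) + length F = length (concat (map labels F))" .
  then have "(\<Sum>i<length F. \<Sum>x\<in>DecT (F ! i). if fst x = [] then 0 else 1) + length F =
      length (concat (map labels F))" unfolding A_def .
  then show ?thesis using e forest_len[OF F] by simp
qed


definition SS :: "nat \<Rightarrow> nat \<Rightarrow> nat \<Rightarrow> real \<Rightarrow> real" where
  "SS n k r t = (\<Sum>F\<in>forests n k r. t ^ eld F)"

lemma sum_Sigma':
  "finite A \<Longrightarrow> \<forall>x\<in>A. finite (B x) \<Longrightarrow> sum f (Sigma A B) = (\<Sum>x\<in>A. \<Sum>y\<in>B x. f (x, y))"
  using sum.Sigma[of A B "\<lambda>x y. f (x, y)"] by simp

lemma inner0:
  fixes t :: real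
  assumes F: "F \<in> forests n k r" and rn: "r \<le> n"
  shows "(\<Sum>d\<in>Dec F. \<Sum>c\<in>C0 d. t ^ (eld F + eps (snd d) c)) =
    t ^ eld F * (real n + t * real (n - r) + t * real k)"
proof -
  let ?a = "\<lambda>d. length (kids (snd d))" and ?b = "\<lambda>d. ic (root (snd d)) (map beta (kids (snd d)))"
  have "(\<Sum>d\<in>Dec F. \<Sum>c\<in>C0 d. t ^ (eld F + eps (snd d) c)) =
      (\<Sum>d\<in>Dec F. t ^ eld F * (1 + t * real (?a d) + t * real (?b d)))"
  proof (rule sum.cong[OF refl])
    fix d :: "frame list \<times> ptree"
    have "C0 d = C0 (fst d, snd d)" by simp
    then show "(\<Sum>c\<in>C0 d. t ^ (eld F + eps (snd d) c)) = t ^ eld F * (1 + t * real (?a d) + t * real (?b d))"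
      using sum_C0[where t=t and fs="fst d" and e="eld F" and s="snd d"] by simp
  qed
  also have "\<dots> = t ^ eld F * (real (\<Sum>d\<in>Dec F. (1::nat)) + t * real (\<Sum>d\<in>Dec F. ?a d) +
      t * real (\<Sum>d\<in>Dec F. ?b d))"
    by (simp add: sum_distrib_left sum.distrib algebra_simps)
  also have "\<dots> = t ^ eld F * (real n + t * real (n - r) + t * real k)"
  proof -
    have "(\<Sum>d\<in>Dec F. ?a d) = n - r" using L2[OF F] by simp
    then show ?thesis using L1[OF F] L3[OF F] by simp
  qed
  finally show ?thesis .
qed

lemma inner1:
  fixes t :: real
  assumes F: "F \<in> forests n k r" and rn: "r \<le> n"
  shows "(\<Sum>d\<in>Dec F. \<Sum>c\<in>C1 d. t ^ (eld F + eps (snd d) c)) =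
    t ^ eld F * (real (n - r) + real k)"
proof -
  let ?a = "\<lambda>d. if 2 \<le> length (fst d) then 1 else (0::nat)"
    and ?b = "\<lambda>d. ic (root (snd d)) (map beta (kids (snd d)))"
  have "(\<Sum>d\<in>Dec F. \<Sum>c\<in>C1 d. t ^ (eld F + eps (snd d) c)) =
      (\<Sum>d\<in>Dec F. t ^ eld F * (real (?a d) + real (?b d)))"
  proof (rule sum.cong[OF refl])
    fix d :: "frame list \<times> ptree"
    have "C1 d = C1 (fst d, snd d)" by simp
    then show "(\<Sum>c\<in>C1 d. t ^ (eld F + eps (snd d) c)) = t ^ eld F * (real (?a d) + real (?b d))"
      using sum_C1[where t=t and fs="fst d" and e="eld F" and s="snd d"] by simp
  qed
  also have "\<dots> = t ^ eld F * (real (\<Sum>d\<in>Dec F. ?a d) + real (\<Sum>d\<in>Dec F. ?b d))"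
    by (simp only: sum_distrib_left[symmetric] sum.distrib of_nat_sum)
  also have "\<dots> = t ^ eld F * (real (n - r) + real k)"
  proof -
    have "(\<Sum>d\<in>Dec F. ?a d) = n - r" using L4[OF F] by simp
    then show ?thesis using L3[OF F] by simp
  qed
  finally show ?thesis .
qed

lemma rec_main:
  fixes t :: real
  assumes rn: "r \<le> n"
  shows "SS (Suc n) k r t = (real n + t * real (n - r) + t * real k) * SS n k r t +
     (if k = 0 then 0 else (real (n - r) + real (k - 1)) * SS n (k - 1) r t)"
proof -
  let ?w = "\<lambda>y. t ^ (eld (fst y) + eps (snd (fst (snd y))) (snd (snd y)))"
  have "SS (Suc n) k r t = (\<Sum>y\<in>EE n k r. t ^ eld (Psi (Suc n) y))"
    unfolding SS_def by (rule sum.reindex_bij_betw[OF Psi_bij[OF rn], symmetric])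
  also have "\<dots> = (\<Sum>y\<in>EE n k r. ?w y)"
  proof (rule sum.cong[OF refl])
    fix y assume y: "y \<in> EE n k r"
    obtain F fs s c where yy: "y = (F, (fs, s), c)" by (metis prod.exhaust)
    show "t ^ eld (Psi (Suc n) y) = ?w y" using EE_props[of F fs s c n k r] y yy by simp
  qed
  finally have e1: "SS (Suc n) k r t = (\<Sum>y\<in>EE n k r. ?w y)" .
  define A0 where "A0 = (SIGMA F:forests n k r. SIGMA d:Dec F. C0 d)"
  define A1 where "A1 = (if k = 0 then {} else SIGMA F:forests n (k - 1) r. SIGMA d:Dec F. C1 d)"
  have EE: "EE n k r = A0 \<union> A1" unfolding EE_def A0_def A1_def ..
  have fin0: "finite A0" unfolding A0_def
    by (intro finite_SigmaI finite_forests finite_Dec finite_C0)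
  have fin1: "finite A1" unfolding A1_def
    by (simp add: finite_SigmaI finite_forests finite_Dec finite_C1)
  have dis: "A0 \<inter> A1 = {}" unfolding A0_def A1_def by (auto simp: C0_def C1_def)
  have s0: "(\<Sum>y\<in>A0. ?w y) = (\<Sum>F\<in>forests n k r. \<Sum>d\<in>Dec F. \<Sum>c\<in>C0 d. t ^ (eld F + eps (snd d) c))"
    unfolding A0_def
    by (simp add: sum_Sigma' finite_SigmaI finite_forests finite_Dec finite_C0)
  also have "\<dots> = (\<Sum>F\<in>forests n k r. t ^ eld F * (real n + t * real (n - r) + t * real k))"
    by (rule sum.cong[OF refl]) (rule inner0[OF _ rn])
  also have "\<dots> = (real n + t * real (n - r) + t * real k) * SS n k r t"
    unfolding SS_def sum_distrib_left by (simp add: mult.commute)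
  finally have s0: "(\<Sum>y\<in>A0. ?w y) = (real n + t * real (n - r) + t * real k) * SS n k r t" .
  have s1: "(\<Sum>y\<in>A1. ?w y) = (if k = 0 then 0 else (real (n - r) + real (k - 1)) * SS n (k - 1) r t)"
  proof (cases "k = 0")
    case True then show ?thesis unfolding A1_def by simp
  next
    case False
    have "(\<Sum>y\<in>A1. ?w y) = (\<Sum>F\<in>forests n (k - 1) r. \<Sum>d\<in>Dec F. \<Sum>c\<in>C1 d. t ^ (eld F + eps (snd d) c))"
      unfolding A1_def using False
      by (simp add: sum_Sigma' finite_SigmaI finite_forests finite_Dec finite_C1)
    also have "\<dots> = (\<Sum>F\<in>forests n (k - 1) r. t ^ eld F * (real (n - r) + real (k - 1)))"
      by (rule sum.cong[OF refl]) (rule inner1[OF _ rn])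
    also have "\<dots> = (real (n - r) + real (k - 1)) * SS n (k - 1) r t"
      unfolding SS_def sum_distrib_left by (simp add: mult.commute)
    finally show ?thesis using False by simp
  qed
  have "(\<Sum>y\<in>EE n k r. ?w y) = (\<Sum>y\<in>A0. ?w y) + (\<Sum>y\<in>A1. ?w y)"
    unfolding EE by (rule sum.union_disjoint[OF fin0 fin1 dis])
  then show ?thesis using e1 s0 s1 by simp
qed


lemma coeff_q: "coeff (smult mm p + [:0, 1:] * pderiv p) k = (mm + real k) * coeff p (k::nat)"
  for p :: "real poly"
proof (cases k)
  case 0 then show ?thesis by simp
next
  case (Suc j)
  then show ?thesis by (simp add: coeff_pderiv algebra_simps)
qed

lemma Qmk_rec:
  "Qmk (Suc (Suc m)) k x t = (x + real (Suc m) + t * (real (Suc m) + real k)) * Qmk (Suc m) k x t +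
    (if k = 0 then 0 else (real (Suc m) + real (k - 1)) * Qmk (Suc m) (k - 1) x t)"
proof -
  define p where "p = Qp (Suc m) x 1 t"
  define q where "q = smult (real (Suc m)) p + [:0, 1:] * pderiv p"
  have cq: "\<And>j. coeff q j = (real (Suc m) + real j) * coeff p j"
    unfolding q_def by (rule coeff_q)
  have e: "Qp (Suc (Suc m)) x 1 t = smult (x + real (Suc m)) p + (smult t q + pCons 0 q)"
    unfolding p_def q_def by (simp add: Let_def)
  have c1: "coeff (pCons 0 q) k = (if k = 0 then 0 else (real (Suc m) + real (k - 1)) * coeff p (k - 1))"
    by (cases k) (simp_all add: cq)
  have "Qmk (Suc (Suc m)) k x t = (x + real (Suc m)) * coeff p k + t * coeff q k + coeff (pCons 0 q) k"
    unfolding Qmk_def e by simp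
  also have "\<dots> = (x + real (Suc m) + t * (real (Suc m) + real k)) * coeff p k +
    (if k = 0 then 0 else (real (Suc m) + real (k - 1)) * coeff p (k - 1))"
    unfolding c1 cq by (simp add: algebra_simps)
  finally show ?thesis unfolding Qmk_def p_def .
qed

lemma Qmk_1: "Qmk (Suc 0) k x t = (if k = 0 then 1 else 0)"
  by (simp add: Qmk_def coeff_1)

lemma sum_list_ones:
  "sum_list (map f xs) = length xs \<Longrightarrow> \<forall>x\<in>set xs. (1::nat) \<le> f x \<Longrightarrow> \<forall>x\<in>set xs. f x = 1"
proof (induction xs)
  case Nil then show ?case by simp
next
  case (Cons a xs)
  have "sum_list (map f xs) \<ge> length xs"
  proof -
    have "sum_list (map (\<lambda>_. 1::nat) xs) \<le> sum_list (map f xs)"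
      using Cons.prems(2) by (intro sum_list_mono) simp
    then show ?thesis by (simp add: sum_list_triv)
  qed
  have p1: "f a + sum_list (map f xs) = Suc (length xs)" using Cons.prems(1) by simp
  have p2: "1 \<le> f a" using Cons.prems(2) by simp
  have fa: "f a = 1" using p1 p2 \<open>sum_list (map f xs) \<ge> length xs\<close> by linarith
  have sx: "sum_list (map f xs) = length xs" using p1 p2 \<open>sum_list (map f xs) \<ge> length xs\<close> by linarith
  have "\<forall>x\<in>set xs. f x = 1" using Cons.IH[OF sx] Cons.prems(2) by simp
  then show ?case using fa by simp
qed

definition Fr0 :: "nat \<Rightarrow> ptree list" where
  "Fr0 r = map (\<lambda>i. Node (Suc i) []) [0..<r]"

lemma Fr0_in: "Fr0 r \<in> forests r 0 r"
proof -
  have c: "concat (map labels (Fr0 r)) = [1..<Suc r]"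
    unfolding Fr0_def by (induction r) auto
  have i: "improper_count (Fr0 r) = 0"
    unfolding Fr0_def improper_count_def by (induction r) auto
  have l: "length (Fr0 r) = r" by (simp add: Fr0_def)
  have rt: "\<forall>i<r. root (Fr0 r ! i) = i + 1" by (simp add: Fr0_def)
  have d: "distinct (concat (map labels (Fr0 r)))" unfolding c by simp
  have st: "set (concat (map labels (Fr0 r))) = {1..r}" unfolding c by auto
  show ?thesis unfolding forests_def mem_Collect_eq using d st i l rt by (intro conjI) assumption+
qed

lemma forests_base_mem:
  assumes F: "F \<in> forests r k r"
  shows "F = Fr0 r \<and> k = 0"
proof -
  have lF: "length F = r" and rt: "\<forall>i<r. root (F ! i) = i + 1"
    using F by (auto simp: forests_def)
  have ln: "length (concat (map labels F)) = r" using forest_len[OF F] by simp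
  have s: "sum_list (map (\<lambda>t. length (labels t)) F) = length F"
    using ln lF by (simp add: length_concat o_def)
  have one: "\<forall>t\<in>set F. length (labels t) = 1"
    by (rule sum_list_ones[OF s]) (simp add: Suc_le_eq)
  have nodes: "\<forall>t\<in>set F. kids t = []"
  proof
    fix t assume "t \<in> set F"
    then have l1: "length (labels t) = 1" using one by simp
    obtain v cs where t: "t = Node v cs" by (cases t)
    have "concat (map labels cs) = []" using l1 t by simp
    then show "kids t = []" using t by simp
  qed
  have "F = Fr0 r"
  proof (rule nth_equalityI)
    show "length F = length (Fr0 r)" using lF by (simp add: Fr0_def)
  next
    fix i assume i: "i < length F"
    obtain v cs where t: "F ! i = Node v cs" by (cases "F ! i")
    have "cs = []" using nodes i t by (metis kids.simps nth_mem)
    moreover have "v = Suc i" using rt i lF t by force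
    ultimately show "F ! i = Fr0 r ! i" using t i lF by (simp add: Fr0_def)
  qed
  moreover have "improper_count (Fr0 r) = 0" using Fr0_in by (simp add: forests_def)
  ultimately show ?thesis using F by (simp add: forests_def)
qed

lemma SS_base: "SS r k r t = (if k = 0 then 1 else 0)"
proof -
  have "forests r k r = (if k = 0 then {Fr0 r} else {})"
    using forests_base_mem Fr0_in by (auto)
  moreover have "eld (Fr0 r) = 0" unfolding Fr0_def eld_def by (induction r) auto
  ultimately show ?thesis unfolding SS_def by simp
qed

lemma SS_main: "SS (r + Suc m) k r t = real r * Qmk (Suc m) k (real r) t"
proof (induction m arbitrary: k)
  case 0
  have e: "SS (Suc r) k r t = (real r + t * real k) * SS r k r t +
     (if k = 0 then 0 else real (k - 1) * SS r (k - 1) r t)"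
    using rec_main[where r=r and n=r and t=t and k=k] by simp
  show ?case
  proof (cases "k = 0")
    case True then show ?thesis using e by (simp add: SS_base Qmk_1)
  next
    case False
    have "real (k - 1) * SS r (k - 1) r t = 0" by (simp add: SS_base)
    then show ?thesis using e False by (simp add: SS_base Qmk_1)
  qed
next
  case (Suc m)
  let ?n = "r + Suc m"
  have e: "SS (Suc ?n) k r t = (real ?n + t * real (?n - r) + t * real k) * SS ?n k r t +
     (if k = 0 then 0 else (real (?n - r) + real (k - 1)) * SS ?n (k - 1) r t)"
    by (rule rec_main) simp
  have nr: "?n - r = Suc m" by simp
  have "SS (r + Suc (Suc m)) k r t = SS (Suc ?n) k r t" by simp
  also have "\<dots> = (real ?n + t * real (Suc m) + t * real k) * (real r * Qmk (Suc m) k (real r) t) +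
     (if k = 0 then 0 else (real (Suc m) + real (k - 1)) * (real r * Qmk (Suc m) (k - 1) (real r) t))"
    using e Suc.IH nr by simp
  also have "\<dots> = real r * Qmk (Suc (Suc m)) k (real r) t"
    unfolding Qmk_rec by (simp add: algebra_simps)
  finally show ?case .
qed

theorem theorem5p1:
  fixes r n k :: nat and t :: real
  assumes "r \<ge> 1" and "n \<ge> r + 1"
  shows "real r * Qmk (n - r) k (real r) t = (\<Sum>F\<in>forests n k r. t ^ eld F)"
proof -
  obtain m where n: "n = r + Suc m" using assms(2) by (metis add_Suc_right le_iff_add plus_1_eq_Suc add.commute)
  have "n - r = Suc m" using n by simp
  then show ?thesis using SS_main[of r m k t] n unfolding SS_def by simp
qed


end
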